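(* Let $S\subseteq\Sigma^n$ be a double-MDS-code that is not prime, and suppose $G(S)$ has $K$ connected components. Then $K$ is a power of $2$, and there exist $k=1+\log_2K\ge 2$, a partition $\{K_1,\ldots,K_k\}$ of $[n]$ into nonempty sets with $n_j=|K_j|<n$, and prime double-MDS-codes $S_j\subseteq\Sigma^{n_j}$ such that $\chi_S(\bar x)=\bigoplus_{j=1}^k\chi_{S_j}(\bar x_{K_j})$ for all $\bar x\in\Sigma^n$.
   Context: Let $\Sigma=\{0,1,2,3\}$ and $[n]=\{1,\ldots,n\}$. An $i$-line of $\Sigma^n$ is a set of the four words that agree in all coordinates except the $i$th; a line is an $i$-line for some $i\in[n]$. A set $S\subseteq\Sigma^n$ is a double-code if every line contains either $0$ or $2$ elements of $S$, and a double-MDS-code if every line contains exactly $2$ elements of $S$. A double-code is complementable if it is contained in some double-MDS-code, and prime if it is complementable, nonempty, and cannot be partitioned into two or more nonempty double-codes. The adjacency graph $G(S)$ of $S\subseteq\Sigma^n$ has vertex set $S$, two vertices being adjacent iff they differ in exactly one coordinate. $\chi_S$ is the characteristic function of $S$, $\oplus$ is addition modulo $2$, and for $K=\{i_1<\cdots<i_m\}\subseteq[n]$, $\bar x_K=(x_{i_1},\ldots,x_{i_m})$. *)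

theory Defs
  imports Main "HOL-Library.Disjoint_Sets"
begin

text \<open>Words of \<Sigma>^n with \<Sigma> = {0,1,2,3} are lists of naturals of length n with entries < 4.
  Coordinates are indexed 0..n-1 (instead of 1..n).\<close>

definition words :: "nat \<Rightarrow> nat list set" where
  "words n = {x. length x = n \<and> set x \<subseteq> {0..<4}}"

definition line_through :: "nat list \<Rightarrow> nat \<Rightarrow> nat list set" where
  "line_through x i = {x[i := a] | a. a < 4}"

definition is_line :: "nat \<Rightarrow> nat list set \<Rightarrow> bool" where
  "is_line n L \<longleftrightarrow> (\<exists>x \<in> words n. \<exists>i < n. L = line_through x i)"

definition double_code :: "nat \<Rightarrow> nat list set \<Rightarrow> bool" where
  "double_code n S \<longleftrightarrow> S \<subseteq> words n \<and>
     (\<forall>L. is_line n L \<longrightarrow> card (L \<inter> S) = 0 \<or> card (L \<inter> S) = 2)"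

definition double_MDS_code :: "nat \<Rightarrow> nat list set \<Rightarrow> bool" where
  "double_MDS_code n S \<longleftrightarrow> S \<subseteq> words n \<and>
     (\<forall>L. is_line n L \<longrightarrow> card (L \<inter> S) = 2)"

definition complementable :: "nat \<Rightarrow> nat list set \<Rightarrow> bool" where
  "complementable n S \<longleftrightarrow> double_code n S \<and> (\<exists>M. double_MDS_code n M \<and> S \<subseteq> M)"

definition prime_code :: "nat \<Rightarrow> nat list set \<Rightarrow> bool" where
  "prime_code n S \<longleftrightarrow> complementable n S \<and> S \<noteq> {} \<and>
     \<not> (\<exists>P. partition_on S P \<and> card P \<ge> 2 \<and> (\<forall>T \<in> P. double_code n T))"

definition adjacent :: "nat list \<Rightarrow> nat list \<Rightarrow> bool" where
  "adjacent x y \<longleftrightarrow> length x = length y \<and> card {i. i < length x \<and> x ! i \<noteq> y ! i} = 1"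

definition adj_in :: "nat list set \<Rightarrow> nat list \<Rightarrow> nat list \<Rightarrow> bool" where
  "adj_in S x y \<longleftrightarrow> x \<in> S \<and> y \<in> S \<and> adjacent x y"

definition components :: "nat list set \<Rightarrow> nat list set set" where
  "components S = {{y \<in> S. (adj_in S)\<^sup>*\<^sup>* x y} | x. x \<in> S}"

end

theory Submission
  imports Defs
begin



definition cnt :: "nat list set \<Rightarrow> nat list \<Rightarrow> nat \<Rightarrow> nat" where
  "cnt S x i = card {a. a < 4 \<and> x[i:=a] \<in> S}"

lemma words_iff: "x \<in> words n \<longleftrightarrow> length x = n \<and> (\<forall>i<n. x ! i < 4)"
  unfolding words_def by (auto simp: in_set_conv_nth subset_iff)

lemma words_len: "x \<in> words n \<Longrightarrow> length x = n"
  by (simp add: words_def)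

lemma words_nth: "x \<in> words n \<Longrightarrow> i < n \<Longrightarrow> x ! i < 4"
  by (simp add: words_iff)

lemma words_upd: "x \<in> words n \<Longrightarrow> a < 4 \<Longrightarrow> x[i:=a] \<in> words n"
  unfolding words_def using set_update_subset_insert[of x i a] by auto

lemma line_inter:
  assumes "x \<in> words n" "i < n"
  shows "card (line_through x i \<inter> S) = cnt S x i"
proof -
  have "line_through x i \<inter> S = (\<lambda>a. x[i:=a]) ` {a. a<4 \<and> x[i:=a] \<in> S}"
    by (auto simp: line_through_def)
  moreover have "inj_on (\<lambda>a. x[i:=a]) {a. a<4 \<and> x[i:=a] \<in> S}"
  proof
    fix a b assume "x[i:=a] = x[i:=b]"
    then have "x[i:=a] ! i = x[i:=b] ! i" by simp
    then show "a = b" using assms by (simp add: words_len)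
  qed
  ultimately show ?thesis by (simp add: cnt_def card_image)
qed

lemma MDS_iff:
  "double_MDS_code n S \<longleftrightarrow> S \<subseteq> words n \<and> (\<forall>x\<in>words n. \<forall>i<n. cnt S x i = 2)"
  unfolding double_MDS_code_def is_line_def using line_inter by fastforce

lemma DC_iff:
  "double_code n S \<longleftrightarrow> S \<subseteq> words n \<and> (\<forall>x\<in>words n. \<forall>i<n. cnt S x i = 0 \<or> cnt S x i = 2)"
  unfolding double_code_def is_line_def using line_inter by fastforce

lemma lt4: "(a::nat) < 4 \<longleftrightarrow> a = 0 \<or> a = 1 \<or> a = 2 \<or> a = 3"
  by auto

lemma card4: "card {a::nat. a < 4 \<and> P a} =
   (if P 0 then 1 else 0) + (if P 1 then 1 else 0) + (if P 2 then 1 else 0) + (if P 3 then 1 else 0)"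
proof -
  have e: "{a::nat. a < 4 \<and> P a} = {a. a = 0 \<and> P 0} \<union> {a. a = 1 \<and> P 1} \<union> {a. a = 2 \<and> P 2} \<union> {a. a = 3 \<and> P 3}"
    by (auto simp: lt4)
  show ?thesis unfolding e
    by (cases "P 0"; cases "P 1"; cases "P 2"; cases "P 3") (simp_all add: card_insert_if)
qed

lemma card4_2_xor: "card {a::nat. a < 4 \<and> P a} = 2 \<Longrightarrow> ((P 0 = P 1) = (P 2 = P 3))"
  unfolding card4 by (cases "P 0"; cases "P 1"; cases "P 2"; cases "P 3") simp_all

lemma cnt_xor: "cnt S x i = 2 \<Longrightarrow> ((x[i:=0] \<in> S) = (x[i:=1] \<in> S)) = ((x[i:=2] \<in> S) = (x[i:=3] \<in> S))"
  unfolding cnt_def by (rule card4_2_xor)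

definition U4 :: "(nat \<times> nat) set" where "U4 = {(a,b). a < 4 \<and> b < 4}"
definition row :: "(nat \<times> nat) set \<Rightarrow> nat \<Rightarrow> nat set" where "row P a = {b. b < 4 \<and> (a,b) \<in> P}"
definition col :: "(nat \<times> nat) set \<Rightarrow> nat \<Rightarrow> nat set" where "col P b = {a. a < 4 \<and> (a,b) \<in> P}"

definition reg2 :: "(nat \<times> nat) set \<Rightarrow> bool" where
  "reg2 P \<longleftrightarrow> P \<subseteq> U4 \<and> (\<forall>a<4. card (row P a) = 2) \<and> (\<forall>b<4. card (col P b) = 2)"

definition splitP :: "(nat \<times> nat) set \<Rightarrow> bool" where
  "splitP P \<longleftrightarrow> (\<forall>a a' b b'. a < 4 \<longrightarrow> a' < 4 \<longrightarrow> b < 4 \<longrightarrow> b' < 4 \<longrightarrow>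
      (((a,b) \<in> P \<longleftrightarrow> (a',b) \<in> P) \<longleftrightarrow> ((a,b') \<in> P \<longleftrightarrow> (a',b') \<in> P)))"

lemma splitP_compl: "splitP P \<Longrightarrow> splitP (U4 - P)"
  unfolding splitP_def
proof (intro allI impI)
  fix a a' b b' :: nat
  assume h: "\<forall>a a' b b'. a < 4 \<longrightarrow> a' < 4 \<longrightarrow> b < 4 \<longrightarrow> b' < 4 \<longrightarrow>
      (((a,b) \<in> P \<longleftrightarrow> (a',b) \<in> P) \<longleftrightarrow> ((a,b') \<in> P \<longleftrightarrow> (a',b') \<in> P))"
    and lt: "a < 4" "a' < 4" "b < 4" "b' < 4"
  from h lt have "((a,b) \<in> P \<longleftrightarrow> (a',b) \<in> P) \<longleftrightarrow> ((a,b') \<in> P \<longleftrightarrow> (a',b') \<in> P)" by blast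
  then show "((a,b) \<in> U4 - P \<longleftrightarrow> (a',b) \<in> U4 - P) \<longleftrightarrow> ((a,b') \<in> U4 - P \<longleftrightarrow> (a',b') \<in> U4 - P)"
    using lt by (simp add: U4_def)
qed

lemma card_compl4: "A \<subseteq> {..<4::nat} \<Longrightarrow> card ({..<4} - A) = 4 - card A"
  by (simp add: card_Diff_subset finite_subset)

lemma sub_card_eq: "X \<subseteq> Y \<Longrightarrow> finite Y \<Longrightarrow> card X = card Y \<Longrightarrow> X = Y"
  using card_subset_eq by blast

lemma L1:
  assumes reg: "reg2 Q" and RQ: "R \<subseteq> Q"
    and rc: "\<And>a b b'. (a,b) \<in> Q \<Longrightarrow> (a,b') \<in> Q \<Longrightarrow> ((a,b) \<in> R \<longleftrightarrow> (a,b') \<in> R)"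
    and cc: "\<And>a a' b. (a,b) \<in> Q \<Longrightarrow> (a',b) \<in> Q \<Longrightarrow> ((a,b) \<in> R \<longleftrightarrow> (a',b) \<in> R)"
    and ne: "R \<noteq> {}" and nq: "R \<noteq> Q"
  shows "\<exists>A C. A \<subseteq> {..<4} \<and> C \<subseteq> {..<4} \<and> card A = 2 \<and> card C = 2 \<and>
     Q = {(a,b). a < 4 \<and> b < 4 \<and> (a \<in> A \<longleftrightarrow> b \<in> C)} \<and>
     R = {(a,b). a < 4 \<and> b < 4 \<and> a \<in> A \<and> b \<in> C}"
proof -
  have QU: "Q \<subseteq> U4" using reg by (simp add: reg2_def)
  have Q4: "(a,b) \<in> Q \<Longrightarrow> a < 4 \<and> b < 4" for a b using QU by (auto simp: U4_def)
  define A where "A = {a. a < 4 \<and> (\<exists>b. (a,b) \<in> R)}"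
  define C where "C = {b. b < 4 \<and> (\<exists>a. (a,b) \<in> R)}"
  have AU: "A \<subseteq> {..<4}" and CU: "C \<subseteq> {..<4}" by (auto simp: A_def C_def)
  have RA: "a \<in> A \<and> b \<in> C" if "(a,b) \<in> R" for a b
  proof -
    have "a < 4 \<and> b < 4" using Q4 RQ that by blast
    then show ?thesis using that unfolding A_def C_def by blast
  qed
  have f1: "(a,b) \<in> R" if h: "a \<in> A" "(a,b) \<in> Q" for a b
  proof -
    obtain b0 where "(a,b0) \<in> R" using h(1) by (auto simp: A_def)
    then show ?thesis using rc[of a b0 b] RQ h(2) by blast
  qed
  have f2: "(a,b) \<in> R" if h: "b \<in> C" "(a,b) \<in> Q" for a b
  proof -
    obtain a0 where "(a0,b) \<in> R" using h(1) by (auto simp: C_def)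
    then show ?thesis using cc[of a0 b a] RQ h(2) by blast
  qed
  have f3: "(a \<in> A \<longleftrightarrow> b \<in> C)" if "(a,b) \<in> Q" for a b
  proof
    assume "a \<in> A" then show "b \<in> C" using f1 RA that by blast
  next
    assume "b \<in> C" then show "a \<in> A" using f2 RA that by blast
  qed
  have rowA: "row Q a \<subseteq> C" if "a \<in> A" for a
  proof
    fix b assume "b \<in> row Q a"
    then have "(a,b) \<in> Q" "b < 4" by (auto simp: row_def)
    then show "b \<in> C" using f3 that by blast
  qed
  have rowNA: "row Q a \<subseteq> {..<4} - C" if "a \<notin> A" for a
  proof
    fix b assume "b \<in> row Q a"
    then have "(a,b) \<in> Q" "b < 4" by (auto simp: row_def)
    then show "b \<in> {..<4} - C" using f3 that by blast
  qed
  have colC: "col Q b \<subseteq> A" if "b \<in> C" for b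
  proof
    fix a assume "a \<in> col Q b"
    then have "(a,b) \<in> Q" "a < 4" by (auto simp: col_def)
    then show "a \<in> A" using f3 that by blast
  qed
  have colNC: "col Q b \<subseteq> {..<4} - A" if "b \<notin> C" for b
  proof
    fix a assume "a \<in> col Q b"
    then have "(a,b) \<in> Q" "a < 4" by (auto simp: col_def)
    then show "a \<in> {..<4} - A" using f3 that by blast
  qed
  obtain a1 b1 where "(a1,b1) \<in> R" using ne by auto
  then have a1: "a1 \<in> A" and b1: "b1 \<in> C" using RA by auto
  have a14: "a1 < 4" using a1 AU by auto
  have b14: "b1 < 4" using b1 CU by auto
  have "\<exists>a0<4. a0 \<notin> A"
  proof (rule ccontr)
    assume "\<not> ?thesis"
    then have "Q \<subseteq> R" using f1 Q4 by auto
    then show False using nq RQ by auto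
  qed
  then obtain a0 where a0: "a0 < 4" "a0 \<notin> A" by auto
  have "\<exists>b0<4. b0 \<notin> C"
  proof (rule ccontr)
    assume "\<not> ?thesis"
    then have "Q \<subseteq> R" using f2 Q4 by auto
    then show False using nq RQ by auto
  qed
  then obtain b0 where b0: "b0 < 4" "b0 \<notin> C" by auto
  have rq: "card (row Q a) = 2" if "a < 4" for a using reg that by (simp add: reg2_def)
  have cq: "card (col Q b) = 2" if "b < 4" for b using reg that by (simp add: reg2_def)
  have fC: "finite C" and fA: "finite A" using AU CU finite_subset by auto
  have fC': "finite ({..<4::nat} - C)" and fA': "finite ({..<4::nat} - A)" by auto
  have "card C \<ge> 2" using card_mono[OF fC rowA[OF a1]] rq[OF a14] by simp
  moreover have "card ({..<4} - C) \<ge> 2" using card_mono[OF fC' rowNA[OF a0(2)]] rq[OF a0(1)] by simp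
  ultimately have cC: "card C = 2" using card_compl4[OF CU] by linarith
  have "card A \<ge> 2" using card_mono[OF fA colC[OF b1]] cq[OF b14] by simp
  moreover have "card ({..<4} - A) \<ge> 2" using card_mono[OF fA' colNC[OF b0(2)]] cq[OF b0(1)] by simp
  ultimately have cA: "card A = 2" using card_compl4[OF AU] by linarith
  have r1: "row Q a = C" if "a \<in> A" for a
  proof -
    have a4: "a < 4" using that AU by auto
    show ?thesis using sub_card_eq[OF rowA[OF that] fC] rq[OF a4] cC by simp
  qed
  have r2: "row Q a = {..<4} - C" if "a < 4" "a \<notin> A" for a
    using sub_card_eq[OF rowNA[OF that(2)] fC'] rq[OF that(1)] card_compl4[OF CU] cC by simp
  have Qeq: "Q = {(a,b). a < 4 \<and> b < 4 \<and> (a \<in> A \<longleftrightarrow> b \<in> C)}"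
  proof (intro set_eqI iffI)
    fix p assume "p \<in> Q"
    then show "p \<in> {(a,b). a < 4 \<and> b < 4 \<and> (a \<in> A \<longleftrightarrow> b \<in> C)}"
      using Q4 f3 by (cases p) auto
  next
    fix p assume p: "p \<in> {(a,b). a < 4 \<and> b < 4 \<and> (a \<in> A \<longleftrightarrow> b \<in> C)}"
    obtain a b where ab: "p = (a,b)" by (cases p)
    have ab4: "a < 4" "b < 4" using p ab by auto
    show "p \<in> Q"
    proof (cases "a \<in> A")
      case True
      then have "b \<in> C" using p ab by auto
      then have "b \<in> row Q a" using r1[OF True] by simp
      then show ?thesis using ab by (simp add: row_def)
    next
      case False
      then have "b \<notin> C" using p ab by auto
      then have "b \<in> row Q a" using r2[OF ab4(1) False] ab4 by simp
      then show ?thesis using ab by (simp add: row_def)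
    qed
  qed
  have Req: "R = {(a,b). a < 4 \<and> b < 4 \<and> a \<in> A \<and> b \<in> C}"
  proof (intro set_eqI iffI)
    fix p assume "p \<in> R"
    then show "p \<in> {(a,b). a < 4 \<and> b < 4 \<and> a \<in> A \<and> b \<in> C}"
      using RA RQ Q4 by (cases p) blast
  next
    fix p assume p: "p \<in> {(a,b). a < 4 \<and> b < 4 \<and> a \<in> A \<and> b \<in> C}"
    then have "p \<in> Q" using Qeq by auto
    then show "p \<in> R" using f1 p by (cases p) auto
  qed
  show ?thesis using AU CU cA cC Qeq Req by blast
qed

lemma L2:
  assumes reg: "reg2 P" and AU: "A \<subseteq> {..<4}" and CU: "C \<subseteq> {..<4}"
    and cA: "card A = 2" and cC: "card C = 2"
    and av: "\<And>a b. a < 4 \<Longrightarrow> b < 4 \<Longrightarrow> a \<notin> A \<Longrightarrow> b \<notin> C \<Longrightarrow> (a,b) \<notin> P"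
  shows "P = {(a,b). a < 4 \<and> b < 4 \<and> (a \<in> A \<longleftrightarrow> b \<notin> C)}"
proof -
  have PU: "P \<subseteq> U4" using reg by (simp add: reg2_def)
  have rq: "a < 4 \<Longrightarrow> card (row P a) = 2" for a using reg by (simp add: reg2_def)
  have cq: "b < 4 \<Longrightarrow> card (col P b) = 2" for b using reg by (simp add: reg2_def)
  have fC: "finite C" and fA: "finite A" using AU CU finite_subset by auto
  have r1: "row P a = C" if a: "a < 4" "a \<notin> A" for a
  proof -
    have "row P a \<subseteq> C" using av a CU by (auto simp: row_def)
    moreover have "card (row P a) = card C" using rq[OF a(1)] cC by simp
    ultimately show ?thesis using sub_card_eq fC by blast
  qed
  have c1: "col P b = {..<4} - A" if b: "b \<in> C" for b
  proof -
    have b4: "b < 4" using b CU by auto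
    have "{..<4} - A \<subseteq> col P b" using r1 b b4 by (auto simp: col_def row_def)
    moreover have "card ({..<4} - A) = card (col P b)" using card_compl4[OF AU] cA cq[OF b4] by simp
    moreover have "finite (col P b)" by (simp add: col_def)
    ultimately show ?thesis using sub_card_eq by metis
  qed
  have r2: "row P a = {..<4} - C" if a: "a \<in> A" for a
  proof -
    have a4: "a < 4" using a AU by auto
    have "row P a \<subseteq> {..<4} - C"
    proof
      fix x assume "x \<in> row P a"
      then have x4: "x < 4" "(a,x) \<in> P" by (auto simp: row_def)
      show "x \<in> {..<4} - C"
      proof (cases "x \<in> C")
        case True
        then have "a \<in> col P x" using a4 x4 by (simp add: col_def)
        then have "a \<in> {..<4} - A" using c1[OF True] by simp
        then show ?thesis using a by simp
      next
        case False
        then show ?thesis using x4 by simp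
      qed
    qed
    moreover have "card (row P a) = card ({..<4} - C)" using rq[OF a4] card_compl4[OF CU] cC by simp
    ultimately show ?thesis using sub_card_eq by blast
  qed
  show ?thesis
  proof (intro set_eqI iffI)
    fix p assume "p \<in> P"
    obtain a b where ab: "p = (a,b)" by (cases p)
    with \<open>p \<in> P\<close> PU have ab4: "a < 4" "b < 4" by (auto simp: U4_def)
    have "b \<in> row P a" using \<open>p \<in> P\<close> ab ab4 by (simp add: row_def)
    then show "p \<in> {(a,b). a < 4 \<and> b < 4 \<and> (a \<in> A \<longleftrightarrow> b \<notin> C)}"
      using r1 r2 ab ab4 by (cases "a \<in> A") auto
  next
    fix p assume p: "p \<in> {(a,b). a < 4 \<and> b < 4 \<and> (a \<in> A \<longleftrightarrow> b \<notin> C)}"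
    obtain a b where ab: "p = (a,b)" by (cases p)
    have "b \<in> row P a" using p ab r1 r2 by (cases "a \<in> A") auto
    then show "p \<in> P" using ab by (simp add: row_def)
  qed
qed




definition PL :: "nat list set \<Rightarrow> nat \<Rightarrow> nat \<Rightarrow> nat list \<Rightarrow> (nat \<times> nat) set" where
  "PL S i j x = {(a,b). a < 4 \<and> b < 4 \<and> x[i:=a, j:=b] \<in> S}"

definition splitx :: "nat list set \<Rightarrow> nat \<Rightarrow> nat \<Rightarrow> nat list \<Rightarrow> bool" where
  "splitx S i j x = splitP (PL S i j x)"

lemma PL_U4: "PL S i j x \<subseteq> U4"
  by (auto simp: PL_def U4_def)

lemma mds_cnt: "double_MDS_code n S \<Longrightarrow> x \<in> words n \<Longrightarrow> i < n \<Longrightarrow> cnt S x i = 2"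
  by (simp add: MDS_iff)

lemma mds_sub: "double_MDS_code n S \<Longrightarrow> S \<subseteq> words n"
  by (simp add: MDS_iff)

lemma reg2_PL:
  assumes M: "double_MDS_code n S" and x: "x \<in> words n" and ij: "i < n" "j < n" "i \<noteq> j"
  shows "reg2 (PL S i j x)"
  unfolding reg2_def
proof (intro conjI allI impI)
  show "PL S i j x \<subseteq> U4" by (rule PL_U4)
next
  fix a :: nat assume a: "a < 4"
  have "row (PL S i j x) a = {b. b < 4 \<and> (x[i:=a])[j:=b] \<in> S}"
    using a by (auto simp: row_def PL_def)
  then show "card (row (PL S i j x) a) = 2"
    using mds_cnt[OF M words_upd[OF x a] ij(2)] by (simp add: cnt_def)
next
  fix b :: nat assume b: "b < 4"
  have "col (PL S i j x) b = {a. a < 4 \<and> (x[j:=b])[i:=a] \<in> S}"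
    using b ij(3) by (auto simp: col_def PL_def list_update_swap)
  then show "card (col (PL S i j x) b) = 2"
    using mds_cnt[OF M words_upd[OF x b] ij(1)] by (simp add: cnt_def)
qed

lemma upd_eq_outside:
  assumes "length x = length y" "\<And>k. k < length x \<Longrightarrow> k \<noteq> i \<Longrightarrow> k \<noteq> j \<Longrightarrow> x ! k = y ! k" "i < length x" "j < length x"
  shows "x[i:=a, j:=b] = y[i:=a, j:=b]"
  using assms by (intro nth_equalityI) (auto simp: nth_list_update)

lemma PL_eq:
  assumes "length x = length y" "\<And>k. k < length x \<Longrightarrow> k \<noteq> i \<Longrightarrow> k \<noteq> j \<Longrightarrow> x ! k = y ! k" "i < length x" "j < length x"
  shows "PL S i j x = PL S i j y"
  unfolding PL_def using upd_eq_outside[OF assms] by simp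

lemma upd_comm: "k \<noteq> i \<Longrightarrow> k \<noteq> j \<Longrightarrow> x[k:=c, i:=a, j:=b] = x[i:=a, j:=b, k:=c]"
  by (simp add: list_update_swap)

lemma cover:
  assumes M: "double_MDS_code n S" and x: "x \<in> words n" and ijk: "k < n" "k \<noteq> i" "k \<noteq> j"
    and ab: "a < 4" "b < 4"
  shows "card {c. c < 4 \<and> (a,b) \<in> PL S i j (x[k:=c])} = 2"
proof -
  have "{c. c < 4 \<and> (a,b) \<in> PL S i j (x[k:=c])} = {c. c < 4 \<and> (x[i:=a, j:=b])[k:=c] \<in> S}"
    using ab by (auto simp: PL_def upd_comm[OF ijk(2) ijk(3)])
  then show ?thesis
    using mds_cnt[OF M words_upd[OF words_upd[OF x ab(1)] ab(2)] ijk(1)] by (simp add: cnt_def)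
qed

lemma iff4_even: "((x=y) = (z=w)) = even (of_bool x + of_bool y + of_bool z + of_bool w :: nat)"
  by (cases x; cases y; cases z; cases w) auto

lemma par4:
  fixes f g h k :: "nat \<Rightarrow> nat"
  assumes "f 0 + f 1 + f 2 + f 3 = 2" "g 0 + g 1 + g 2 + g 3 = 2" "h 0 + h 1 + h 2 + h 3 = 2" "k 0 + k 1 + k 2 + k 3 = 2"
    and ev: "\<And>c. c < 4 \<Longrightarrow> c \<noteq> c0 \<Longrightarrow> even (f c + g c + h c + k c)"
    and od: "odd (f c0 + g c0 + h c0 + k c0)" and c0: "c0 < 4"
  shows False
proof -
  have "(f 0 + g 0 + h 0 + k 0) + (f 1 + g 1 + h 1 + k 1) + (f 2 + g 2 + h 2 + k 2) + (f 3 + g 3 + h 3 + k 3) = 8"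
    using assms(1-4) by linarith
  then have e: "even ((f 0 + g 0 + h 0 + k 0) + (f 1 + g 1 + h 1 + k 1) + (f 2 + g 2 + h 2 + k 2) + (f 3 + g 3 + h 3 + k 3))"
    by simp
  have "c0 = 0 \<or> c0 = 1 \<or> c0 = 2 \<or> c0 = 3" using c0 by auto
  then show False
  proof (elim disjE)
    assume "c0 = 0" then show False using e ev[of 1] ev[of 2] ev[of 3] od by (simp only: even_add) simp
  next
    assume "c0 = 1" then show False using e ev[of 0] ev[of 2] ev[of 3] od by (simp only: even_add) simp
  next
    assume "c0 = 2" then show False using e ev[of 0] ev[of 1] ev[of 3] od by (simp only: even_add) simp
  next
    assume "c0 = 3" then show False using e ev[of 0] ev[of 1] ev[of 2] od by (simp only: even_add) simp
  qed
qed

lemma card4_of_bool: "card {c::nat. c < 4 \<and> P c} = of_bool (P 0) + of_bool (P 1) + of_bool (P 2) + of_bool (P 3)"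
  unfolding card4 by simp

lemma nonsplit_line:
  assumes M: "double_MDS_code n S" and x: "x \<in> words n" and ijk: "k < n" "k \<noteq> i" "k \<noteq> j"
    and c0: "c0 < 4" and ns: "\<not> splitx S i j (x[k:=c0])"
  shows "\<exists>c<4. c \<noteq> c0 \<and> \<not> splitx S i j (x[k:=c])"
proof (rule ccontr)
  assume "\<not> ?thesis"
  then have sp: "\<And>c. c < 4 \<Longrightarrow> c \<noteq> c0 \<Longrightarrow> splitx S i j (x[k:=c])" by blast
  from ns obtain a a' b b' where r: "a < 4" "a' < 4" "b < 4" "b' < 4"
    and odd: "\<not> ((((a,b) \<in> PL S i j (x[k:=c0])) \<longleftrightarrow> ((a',b) \<in> PL S i j (x[k:=c0]))) \<longleftrightarrow>
                (((a,b') \<in> PL S i j (x[k:=c0])) \<longleftrightarrow> ((a',b') \<in> PL S i j (x[k:=c0]))))"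
    unfolding splitx_def splitP_def by blast
  define m1 where "m1 c = (x[i:=a, j:=b, k:=c] \<in> S)" for c
  define m2 where "m2 c = (x[i:=a', j:=b, k:=c] \<in> S)" for c
  define m3 where "m3 c = (x[i:=a, j:=b', k:=c] \<in> S)" for c
  define m4 where "m4 c = (x[i:=a', j:=b', k:=c] \<in> S)" for c
  have pl: "((p,q) \<in> PL S i j (x[k:=c])) = (x[i:=p, j:=q, k:=c] \<in> S)" if "p < 4" "q < 4" for p q c
    using that by (simp add: PL_def upd_comm[OF ijk(2) ijk(3)])
  have sc: "(m1 c = m2 c) = (m3 c = m4 c)" if "c < 4" "c \<noteq> c0" for c
  proof -
    have "splitP (PL S i j (x[k:=c]))" using sp[OF that] by (simp add: splitx_def)
    then have "(((a,b) \<in> PL S i j (x[k:=c])) \<longleftrightarrow> ((a',b) \<in> PL S i j (x[k:=c]))) \<longleftrightarrow>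
                (((a,b') \<in> PL S i j (x[k:=c])) \<longleftrightarrow> ((a',b') \<in> PL S i j (x[k:=c])))"
      using r unfolding splitP_def by blast
    then show ?thesis unfolding m1_def m2_def m3_def m4_def
      using pl[OF r(1) r(3)] pl[OF r(2) r(3)] pl[OF r(1) r(4)] pl[OF r(2) r(4)] by simp
  qed
  have nc0: "\<not> ((m1 c0 = m2 c0) = (m3 c0 = m4 c0))"
    using odd r c0 unfolding m1_def m2_def m3_def m4_def by (simp add: pl)
  have w: "x[i:=p, j:=q] \<in> words n" if "p < 4" "q < 4" for p q
    using words_upd[OF words_upd[OF x that(1)] that(2)] .
  have cc: "of_bool (m c 0) + of_bool (m c 1) + of_bool (m c 2) + of_bool (m c 3) = (2::nat)"
    if "m c = (\<lambda>c'. x[i:=p, j:=q, k:=c'] \<in> S)" "p < 4" "q < 4" for m :: "nat \<Rightarrow> nat \<Rightarrow> bool" and c p q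
  proof -
    have "card {c'. c' < 4 \<and> x[i:=p, j:=q, k:=c'] \<in> S} = 2"
      using mds_cnt[OF M w[OF that(2) that(3)] ijk(1)] by (simp add: cnt_def)
    then show ?thesis unfolding card4_of_bool that(1) .
  qed
  show False
  proof (rule par4[of "\<lambda>c. of_bool (m1 c)" "\<lambda>c. of_bool (m2 c)" "\<lambda>c. of_bool (m3 c)" "\<lambda>c. of_bool (m4 c)" c0])
    show "of_bool (m1 0) + of_bool (m1 1) + of_bool (m1 2) + of_bool (m1 3) = (2::nat)"
      using cc[of "\<lambda>_. m1" 0 a b] r unfolding m1_def by simp
    show "of_bool (m2 0) + of_bool (m2 1) + of_bool (m2 2) + of_bool (m2 3) = (2::nat)"
      using cc[of "\<lambda>_. m2" 0 a' b] r unfolding m2_def by simp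
    show "of_bool (m3 0) + of_bool (m3 1) + of_bool (m3 2) + of_bool (m3 3) = (2::nat)"
      using cc[of "\<lambda>_. m3" 0 a b'] r unfolding m3_def by simp
    show "of_bool (m4 0) + of_bool (m4 1) + of_bool (m4 2) + of_bool (m4 3) = (2::nat)"
      using cc[of "\<lambda>_. m4" 0 a' b'] r unfolding m4_def by simp
    show "even (of_bool (m1 c) + of_bool (m2 c) + of_bool (m3 c) + of_bool (m4 c) :: nat)" if "c < 4" "c \<noteq> c0" for c
      using sc[OF that] iff4_even by metis
    show "odd (of_bool (m1 c0) + of_bool (m2 c0) + of_bool (m3 c0) + of_bool (m4 c0) :: nat)"
      using nc0 iff4_even by metis
    show "c0 < 4" by (rule c0)
  qed
qed




definition sub :: "nat \<Rightarrow> nat list \<Rightarrow> nat set \<Rightarrow> nat \<Rightarrow> nat \<Rightarrow> nat list set" where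
  "sub n w B i j = {x \<in> words n. \<forall>k<n. k \<notin> B \<longrightarrow> k \<noteq> i \<longrightarrow> k \<noteq> j \<longrightarrow> x ! k = w ! k}"

definition closedD :: "nat list set \<Rightarrow> nat \<Rightarrow> nat \<Rightarrow> nat list set \<Rightarrow> nat set \<Rightarrow> bool" where
  "closedD S i j D B \<longleftrightarrow> (\<forall>x\<in>D. \<forall>k\<in>B. \<forall>c<4. PL S i j (x[k:=c]) \<noteq> U4 - PL S i j x \<longrightarrow> x[k:=c] \<in> D)"

lemma sub_words: "x \<in> sub n w B i j \<Longrightarrow> x \<in> words n"
  by (simp add: sub_def)

lemma sub_upd: "z \<in> sub n w B i j \<Longrightarrow> k \<in> B \<Longrightarrow> c < 4 \<Longrightarrow> z[k:=c] \<in> sub n w B i j"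
  unfolding sub_def by (auto simp: words_upd) (metis nth_list_update_neq)

lemma row0_nonfull:
  assumes "reg2 P" shows "\<exists>b<4. (0,b) \<notin> P"
proof (rule ccontr)
  assume "\<not> ?thesis"
  then have "row P 0 = {..<4}" by (auto simp: row_def)
  moreover have "card (row P 0) = 2" using assms by (simp add: reg2_def)
  ultimately show False by simp
qed

lemma row0_nonempty:
  assumes "reg2 P" shows "\<exists>b<4. (0,b) \<in> P"
proof (rule ccontr)
  assume "\<not> ?thesis"
  then have "row P 0 = {}" by (auto simp: row_def)
  moreover have "card (row P 0) = 2" using assms by (simp add: reg2_def)
  ultimately show False by simp
qed

lemma PL_ne_compl: "reg2 P \<Longrightarrow> P \<noteq> U4 - P"
  using row0_nonempty by blast

lemma upd_same: "k < length x \<Longrightarrow> x[k := x ! k] = x"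
  by simp

lemma claimY:
  assumes M: "double_MDS_code n S" and ij: "i < n" "j < n" "i \<noteq> j"
  shows "finite B \<Longrightarrow> B \<subseteq> {..<n} - {i,j} \<Longrightarrow> w \<in> words n \<Longrightarrow> D \<subseteq> sub n w B i j \<Longrightarrow> D \<noteq> {} \<Longrightarrow>
    closedD S i j D B \<Longrightarrow> (\<forall>x\<in>D. splitx S i j x) \<Longrightarrow> z \<in> sub n w B i j \<Longrightarrow> splitx S i j z"
proof (induction "card B" arbitrary: B w D z rule: less_induct)
  case less
  note fB = less.prems(1) and BU = less.prems(2) and w = less.prems(3) and DS = less.prems(4)
    and Dne = less.prems(5) and cl = less.prems(6) and Dsp = less.prems(7) and z = less.prems(8)
  have Bn: "k \<in> B \<Longrightarrow> k < n \<and> k \<noteq> i \<and> k \<noteq> j" for k using BU by auto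
  have Dw: "x \<in> D \<Longrightarrow> x \<in> words n" for x using DS sub_words by blast
  have reg: "x \<in> words n \<Longrightarrow> reg2 (PL S i j x)" for x using reg2_PL[OF M _ ij] by blast
  obtain x0 where x0: "x0 \<in> D" using Dne by auto
  show ?case
  proof (rule ccontr)
    assume nz: "\<not> splitx S i j z"
    show False
    proof (cases "B = {}")
      case True
      have "PL S i j z = PL S i j x0"
      proof (rule PL_eq)
        show "length z = length x0" using z x0 DS by (auto simp: sub_def words_len)
        show "i < length z" "j < length z" using z ij by (auto simp: sub_def words_len)
        fix k assume "k < length z" "k \<noteq> i" "k \<noteq> j"
        then show "z ! k = x0 ! k" using z x0 DS \<open>B = {}\<close> by (auto simp: sub_def words_len)
      qed
      then show False using nz Dsp x0 by (simp add: splitx_def)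
    next
      case Bne: False
      have IHuse: "splitx S i j y" if x: "x \<in> D" and k: "k \<in> B" and y: "y \<in> sub n w B i j" and yk: "y ! k = x ! k" for x k y
      proof -
        let ?B = "B - {k}" and ?D = "D \<inter> sub n x (B - {k}) i j"
        have xs: "x \<in> sub n w B i j" using x DS by auto
        have xw: "x \<in> words n" using Dw x .
        show ?thesis
        proof (rule less.hyps[of ?B x ?D y])
          show "card ?B < card B" by (rule card_Diff1_less[OF fB k])
          show "finite ?B" using fB by simp
          show "?B \<subseteq> {..<n} - {i, j}" using BU by auto
          show "x \<in> words n" by (rule xw)
          show "?D \<subseteq> sub n x ?B i j" by auto
          show "?D \<noteq> {}" using x xw by (auto simp: sub_def)
          show "closedD S i j ?D ?B"
            unfolding closedD_def
          proof (intro ballI allI impI)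
            fix u k' c assume u: "u \<in> ?D" and k': "k' \<in> ?B" and c: "c < 4"
              and ne: "PL S i j (u[k':=c]) \<noteq> U4 - PL S i j u"
            have "u[k':=c] \<in> D" using cl u k' c ne unfolding closedD_def by blast
            moreover have "u[k':=c] \<in> sub n x ?B i j" using sub_upd u k' c by blast
            ultimately show "u[k':=c] \<in> ?D" by blast
          qed
          show "\<forall>u\<in>?D. splitx S i j u" using Dsp by blast
          show "y \<in> sub n x ?B i j"
            using y xs yk unfolding sub_def by auto
        qed
      qed
      define Z where "Z k = {c. c < 4 \<and> (\<exists>y\<in>sub n w B i j. y ! k = c \<and> \<not> splitx S i j y)}" for k
      have ZU: "Z k \<subseteq> {..<4}" for k by (auto simp: Z_def)
      have fZ: "finite (Z k)" for k using ZU finite_subset by blast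
      have Zdisj: "x ! k \<notin> Z k" if "x \<in> D" "k \<in> B" for x k
        using IHuse[OF that] unfolding Z_def by blast
      have zw: "z \<in> words n" using z sub_words by blast
      have Z2: "2 \<le> card (Z k)" if k: "k \<in> B" for k
      proof -
        have kn: "k < n" "k \<noteq> i" "k \<noteq> j" using Bn k by auto
        have zk: "z ! k < 4" using zw kn words_nth by blast
        have "\<not> splitx S i j (z[k := z ! k])" using nz by simp
        from nonsplit_line[OF M zw kn zk this]
        obtain c where c: "c < 4" "c \<noteq> z ! k" "\<not> splitx S i j (z[k:=c])" by blast
        have "z ! k \<in> Z k" using z zk nz unfolding Z_def by blast
        moreover have "c \<in> Z k"
        proof -
          have "z[k:=c] \<in> sub n w B i j" using sub_upd[OF z k c(1)] .
          moreover have "z[k:=c] ! k = c" using kn zw by (simp add: words_len)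
          ultimately show ?thesis using c(1) c(3) unfolding Z_def by blast
        qed
        ultimately have sub2: "{z ! k, c} \<subseteq> Z k" by auto
        have "card {z ! k, c} = 2" using c(2) by simp
        then show ?thesis using card_mono[OF fZ sub2] by simp
      qed
      have compl: "PL S i j (x[k:=c]) = U4 - PL S i j x" if x: "x \<in> D" and k: "k \<in> B" and c: "c \<in> Z k" for x k c
      proof (rule ccontr)
        assume "PL S i j (x[k:=c]) \<noteq> U4 - PL S i j x"
        then have "x[k:=c] \<in> D" using cl x k c unfolding closedD_def Z_def by blast
        moreover have "x[k:=c] ! k = c" using Dw[OF x] Bn[OF k] by (simp add: words_len)
        ultimately show False using Zdisj[of "x[k:=c]" k] k c by simp
      qed
      have Sab2: "card {c. c < 4 \<and> (a,b) \<in> PL S i j (x[k:=c])} = 2"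
        if "x \<in> words n" "k \<in> B" "a < 4" "b < 4" for x k a b
        using cover[OF M that(1) _ _ _ that(3) that(4)] Bn[OF that(2)] by blast
      have cardZ: "card (Z k) = 2" if x: "x \<in> D" and k: "k \<in> B" for x k
      proof -
        obtain b where b: "b < 4" "(0,b) \<notin> PL S i j x" using row0_nonfull[OF reg[OF Dw[OF x]]] by blast
        have sZ: "Z k \<subseteq> {c. c < 4 \<and> (0,b) \<in> PL S i j (x[k:=c])}"
        proof
          fix c assume c: "c \<in> Z k"
          then have "c < 4" using ZU by auto
          then show "c \<in> {c. c < 4 \<and> (0,b) \<in> PL S i j (x[k:=c])}"
            using compl[OF x k c] b by (simp add: U4_def)
        qed
        have fin: "finite {c::nat. c < 4 \<and> (0,b) \<in> PL S i j (x[k:=c])}" by simp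
        have "card (Z k) \<le> 2" using card_mono[OF fin sZ] Sab2[OF Dw[OF x] k _ b(1)] by simp
        then show ?thesis using Z2[OF k] by simp
      qed
      have cardNZ: "card ({..<4} - Z k) = 2" if "x \<in> D" "k \<in> B" for x k
        using card_compl4[OF ZU] cardZ[OF that] by simp
      have same: "PL S i j (x[k:=c]) = PL S i j x \<and> x[k:=c] \<in> D"
        if x: "x \<in> D" and k: "k \<in> B" and c: "c < 4" "c \<notin> Z k" for x k c
      proof -
        have xw: "x \<in> words n" using Dw[OF x] .
        have kn: "k < length x" using xw Bn[OF k] by (simp add: words_len)
        have eq: "PL S i j (x[k:=c]) = PL S i j x"
        proof (cases "c = x ! k")
          case True then show ?thesis using kn by simp
        next
          case False
          show ?thesis
          proof (intro set_eqI iffI)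
            fix p assume p: "p \<in> PL S i j (x[k:=c])"
            obtain a b where ab: "p = (a,b)" by (cases p)
            have ab4: "a < 4" "b < 4" using p ab by (auto simp: PL_def)
            show "p \<in> PL S i j x"
            proof (rule ccontr)
              assume np: "p \<notin> PL S i j x"
              let ?Sab = "{c. c < 4 \<and> (a,b) \<in> PL S i j (x[k:=c])}"
              have sZ: "Z k \<subseteq> ?Sab"
              proof
                fix c' assume c': "c' \<in> Z k"
                then have "c' < 4" using ZU by auto
                then show "c' \<in> ?Sab" using compl[OF x k c'] np ab ab4 by (simp add: U4_def)
              qed
              moreover have "card (Z k) = card ?Sab" using cardZ[OF x k] Sab2[OF xw k ab4] by simp
              moreover have "finite ?Sab" by simp
              ultimately have "Z k = ?Sab" using card_subset_eq by blast
              then show False using p ab c by auto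
            qed
          next
            fix p assume p: "p \<in> PL S i j x"
            obtain a b where ab: "p = (a,b)" by (cases p)
            have ab4: "a < 4" "b < 4" using p ab by (auto simp: PL_def)
            let ?Sab = "{c. c < 4 \<and> (a,b) \<in> PL S i j (x[k:=c])}"
            have "?Sab \<subseteq> {..<4} - Z k"
            proof
              fix c' assume c': "c' \<in> ?Sab"
              show "c' \<in> {..<4} - Z k"
              proof (cases "c' \<in> Z k")
                case True
                then have "PL S i j (x[k:=c']) = U4 - PL S i j x" using compl[OF x k] by blast
                then show ?thesis using c' p ab by simp
              next
                case False then show ?thesis using c' by simp
              qed
            qed
            moreover have "card ?Sab = card ({..<4} - Z k)" using cardNZ[OF x k] Sab2[OF xw k ab4] by simp
            moreover have "finite ({..<4::nat} - Z k)" by simp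
            ultimately have "?Sab = {..<4} - Z k" using card_subset_eq by blast
            then show "p \<in> PL S i j (x[k:=c])" using c ab by auto
          qed
        qed
        moreover have "x[k:=c] \<in> D"
        proof -
          have "PL S i j (x[k:=c]) \<noteq> U4 - PL S i j x" using eq PL_ne_compl[OF reg[OF xw]] by simp
          then show ?thesis using cl x k c(1) unfolding closedD_def by blast
        qed
        ultimately show ?thesis by simp
      qed
      have base: "\<forall>x. x \<in> D \<longrightarrow> card {k\<in>B. y ! k \<noteq> x ! k} = m \<longrightarrow> PL S i j y = PL S i j x"
        if y: "y \<in> sub n w B i j" and yZ: "\<forall>k\<in>B. y ! k \<notin> Z k" for y m
      proof (induction m)
        case 0
        show ?case
        proof (intro allI impI)
          fix x assume x: "x \<in> D" and c0: "card {k\<in>B. y ! k \<noteq> x ! k} = 0"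
          have e: "{k\<in>B. y ! k \<noteq> x ! k} = {}" using c0 fB by simp
          have xs: "x \<in> sub n w B i j" using x DS by auto
          show "PL S i j y = PL S i j x"
          proof (rule PL_eq)
            show "length y = length x" using y xs by (auto simp: sub_def words_len)
            show "i < length y" "j < length y" using y ij by (auto simp: sub_def words_len)
            fix k assume k: "k < length y" "k \<noteq> i" "k \<noteq> j"
            show "y ! k = x ! k"
            proof (cases "k \<in> B")
              case True then show ?thesis using e by blast
            next
              case False then show ?thesis using y xs k by (auto simp: sub_def words_len)
            qed
          qed
        qed
      next
        case (Suc m)
        show ?case
        proof (intro allI impI)
          fix x assume x: "x \<in> D" and cS: "card {k\<in>B. y ! k \<noteq> x ! k} = Suc m"
          have ne: "{k\<in>B. y ! k \<noteq> x ! k} \<noteq> {}"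
          proof
            assume e: "{k\<in>B. y ! k \<noteq> x ! k} = {}" show False using cS[unfolded e] by simp
          qed
          then obtain k where k: "k \<in> B" "y ! k \<noteq> x ! k" by blast
          have yw: "y \<in> words n" using y sub_words by blast
          have kn: "k < n" using Bn[OF k(1)] by simp
          have yk4: "y ! k < 4" using yw kn words_nth by blast
          have sm: "PL S i j (x[k:=y!k]) = PL S i j x \<and> x[k:=y!k] \<in> D"
            using same[OF x k(1) yk4] yZ k(1) by blast
          have xl: "length x = n" using Dw[OF x] words_len by blast
          have "{k'\<in>B. y ! k' \<noteq> x[k:=y!k] ! k'} = {k'\<in>B. y ! k' \<noteq> x ! k'} - {k}"
            using xl kn by (auto simp: nth_list_update)
          then have "card {k'\<in>B. y ! k' \<noteq> x[k:=y!k] ! k'} = m"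
            using cS k fB by simp
          then have "PL S i j y = PL S i j (x[k:=y!k])" using Suc.IH sm by blast
          then show "PL S i j y = PL S i j x" using sm by simp
        qed
      qed
      have par: "\<forall>y. y \<in> sub n w B i j \<longrightarrow> card {k\<in>B. y ! k \<in> Z k} = m \<longrightarrow>
          PL S i j y = (if even m then PL S i j x0 else U4 - PL S i j x0)" for m
      proof (induction m)
        case 0
        show ?case
        proof (intro allI impI)
          fix y assume y: "y \<in> sub n w B i j" and c0: "card {k\<in>B. y ! k \<in> Z k} = 0"
          have "\<forall>k\<in>B. y ! k \<notin> Z k" using c0 fB by simp
          then show "PL S i j y = (if even (0::nat) then PL S i j x0 else U4 - PL S i j x0)"
            using base[OF y] x0 by simp
        qed
      next
        case (Suc m)
        show ?case
        proof (intro allI impI)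
          fix y assume y: "y \<in> sub n w B i j" and cS: "card {k\<in>B. y ! k \<in> Z k} = Suc m"
          have ne: "{k\<in>B. y ! k \<in> Z k} \<noteq> {}"
          proof
            assume e: "{k\<in>B. y ! k \<in> Z k} = {}" show False using cS[unfolded e] by simp
          qed
          then obtain k where k: "k \<in> B" "y ! k \<in> Z k" by blast
          have yw: "y \<in> words n" using y sub_words by blast
          have kn: "k < n" using Bn[OF k(1)] by simp
          have yl: "length y = n" using yw words_len by blast
          obtain c1 c2 where c12: "{..<4} - Z k = {c1, c2}" "c1 \<noteq> c2"
            using cardNZ[OF x0 k(1)] by (meson card_2_iff)
          have c1: "c1 < 4" "c1 \<notin> Z k" and c2: "c2 < 4" "c2 \<notin> Z k" using c12(1) by auto
          define R where "R = (if even m then PL S i j x0 else U4 - PL S i j x0)"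
          have PR: "PL S i j (y[k:=c]) = R" if c: "c < 4" "c \<notin> Z k" for c
          proof -
            have "{k'\<in>B. y[k:=c] ! k' \<in> Z k'} = {k'\<in>B. y ! k' \<in> Z k'} - {k}"
              using yl kn c by (auto simp: nth_list_update)
            then have "card {k'\<in>B. y[k:=c] ! k' \<in> Z k'} = m" using cS k fB by simp
            then show ?thesis using Suc.IH sub_upd[OF y k(1) c(1)] unfolding R_def by blast
          qed
          have yk: "y[k := y ! k] = y" by simp
          have PLy: "PL S i j y = U4 - R"
          proof (intro set_eqI iffI)
            fix p assume p: "p \<in> PL S i j y"
            obtain a b where ab: "p = (a,b)" by (cases p)
            have ab4: "a < 4" "b < 4" using p ab by (auto simp: PL_def)
            let ?Sab = "{c. c < 4 \<and> (a,b) \<in> PL S i j (y[k:=c])}"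
            have "p \<notin> R"
            proof
              assume pR: "p \<in> R"
              have "{c1, c2} \<subseteq> ?Sab" using PR[OF c1] PR[OF c2] pR ab c1 c2 by auto
              moreover have "card {c1,c2} = card ?Sab" using c12(2) Sab2[OF yw k(1) ab4] by simp
              moreover have "finite ?Sab" by simp
              ultimately have "?Sab = {c1, c2}" using card_subset_eq by blast
              moreover have "y ! k \<in> ?Sab" using p ab yk ZU k(2) by (auto)
              ultimately show False using k(2) c1 c2 by auto
            qed
            then show "p \<in> U4 - R" using ab ab4 by (simp add: U4_def)
          next
            fix p assume p: "p \<in> U4 - R"
            obtain a b where ab: "p = (a,b)" by (cases p)
            have ab4: "a < 4" "b < 4" using p ab by (auto simp: U4_def)
            let ?Sab = "{c. c < 4 \<and> (a,b) \<in> PL S i j (y[k:=c])}"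
            have "?Sab \<subseteq> Z k"
            proof
              fix c assume c: "c \<in> ?Sab"
              show "c \<in> Z k"
              proof (rule ccontr)
                assume "c \<notin> Z k"
                then have "PL S i j (y[k:=c]) = R" using PR c by auto
                then show False using c p ab by auto
              qed
            qed
            moreover have "card ?Sab = card (Z k)" using cardZ[OF x0 k(1)] Sab2[OF yw k(1) ab4] by simp
            ultimately have "?Sab = Z k" using card_subset_eq fZ by blast
            then have "y ! k \<in> ?Sab" using k(2) by simp
            then show "p \<in> PL S i j y" using ab yk by simp
          qed
          have PLx: "PL S i j x0 \<subseteq> U4" by (rule PL_U4)
          show "PL S i j y = (if even (Suc m) then PL S i j x0 else U4 - PL S i j x0)"
            using PLy PLx unfolding R_def by (auto simp: double_diff)
        qed
      qed
      have sx0: "splitP (PL S i j x0)" using Dsp x0 by (simp add: splitx_def)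
      have "PL S i j z = PL S i j x0 \<or> PL S i j z = U4 - PL S i j x0"
        using par z by (metis (full_types))
      then have "splitx S i j z" using sx0 splitP_compl unfolding splitx_def by auto
      then show False using nz by simp
    qed
  qed
qed




definition lineclosed :: "nat \<Rightarrow> nat list set \<Rightarrow> nat list set \<Rightarrow> bool" where
  "lineclosed n S T \<longleftrightarrow> T \<subseteq> S \<and> (\<forall>u\<in>S. \<forall>p<n. \<forall>c<4. u[p:=c] \<in> S \<longrightarrow> (u \<in> T \<longleftrightarrow> u[p:=c] \<in> T))"

definition cutp :: "nat list set \<Rightarrow> nat list set \<Rightarrow> nat \<Rightarrow> nat \<Rightarrow> nat list \<Rightarrow> bool" where
  "cutp S T i j x \<longleftrightarrow> (\<exists>a b. a < 4 \<and> b < 4 \<and> x[i:=a, j:=b] \<in> T) \<and> (\<exists>a b. a < 4 \<and> b < 4 \<and> x[i:=a, j:=b] \<in> S - T)"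

definition gam :: "nat list set \<Rightarrow> nat \<Rightarrow> nat \<Rightarrow> nat \<Rightarrow> bool" where
  "gam S n i j \<longleftrightarrow> i < n \<and> j < n \<and> i \<noteq> j \<and> (\<exists>x\<in>words n. \<not> splitx S i j x)"

lemma cut_struct:
  assumes M: "double_MDS_code n S" and T: "lineclosed n S T" and x: "x \<in> words n"
    and ij: "i < n" "j < n" "i \<noteq> j" and ct: "cutp S T i j x"
  shows "\<exists>A C. A \<subseteq> {..<4} \<and> C \<subseteq> {..<4} \<and> card A = 2 \<and> card C = 2 \<and>
     PL S i j x = {(a,b). a < 4 \<and> b < 4 \<and> (a \<in> A \<longleftrightarrow> b \<in> C)} \<and>
     {(a,b). a < 4 \<and> b < 4 \<and> x[i:=a, j:=b] \<in> T} = {(a,b). a < 4 \<and> b < 4 \<and> a \<in> A \<and> b \<in> C}"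
proof -
  let ?Q = "PL S i j x" and ?R = "{(a,b). a < 4 \<and> b < 4 \<and> x[i:=a, j:=b] \<in> T}"
  have TS: "T \<subseteq> S" using T by (simp add: lineclosed_def)
  have lc: "\<And>u p c. u \<in> S \<Longrightarrow> p < n \<Longrightarrow> c < 4 \<Longrightarrow> u[p:=c] \<in> S \<Longrightarrow> (u \<in> T \<longleftrightarrow> u[p:=c] \<in> T)"
    using T unfolding lineclosed_def by blast
  have RQ: "?R \<subseteq> ?Q" using TS by (auto simp: PL_def)
  have rc: "((a,b) \<in> ?R \<longleftrightarrow> (a,b') \<in> ?R)" if "(a,b) \<in> ?Q" "(a,b') \<in> ?Q" for a b b'
  proof -
    have h: "a < 4" "b < 4" "b' < 4" "x[i:=a, j:=b] \<in> S" "x[i:=a, j:=b'] \<in> S" using that by (auto simp: PL_def)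
    have "x[i:=a, j:=b, j:=b'] = x[i:=a, j:=b']" by simp
    then show ?thesis using lc[OF h(4) ij(2) h(3)] h by simp
  qed
  have cc: "((a,b) \<in> ?R \<longleftrightarrow> (a',b) \<in> ?R)" if "(a,b) \<in> ?Q" "(a',b) \<in> ?Q" for a a' b
  proof -
    have h: "a < 4" "a' < 4" "b < 4" "x[i:=a, j:=b] \<in> S" "x[i:=a', j:=b] \<in> S" using that by (auto simp: PL_def)
    have "x[i:=a, j:=b, i:=a'] = x[i:=a', j:=b]" using ij(3) by (simp add: list_update_swap)
    then show ?thesis using lc[OF h(4) ij(1) h(2)] h by simp
  qed
  have ne: "?R \<noteq> {}" using ct by (auto simp: cutp_def)
  have nq: "?R \<noteq> ?Q"
  proof
    assume e: "?R = ?Q"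
    obtain a b where "a < 4" "b < 4" "x[i:=a, j:=b] \<in> S - T" using ct by (auto simp: cutp_def)
    then have "(a,b) \<in> ?Q" "(a,b) \<notin> ?R" by (auto simp: PL_def)
    then show False using e by simp
  qed
  show ?thesis using L1[OF reg2_PL[OF M x ij] RQ rc cc ne nq] by blast
qed

lemma splitP_AC: "splitP {(a,b). a < 4 \<and> b < 4 \<and> (a \<in> A \<longleftrightarrow> b \<in> C)}"
  unfolding splitP_def
proof (intro allI impI)
  fix a a' b b' :: nat assume "a < 4" "a' < 4" "b < 4" "b' < 4"
  then show "(((a, b) \<in> {(a,b). a < 4 \<and> b < 4 \<and> (a \<in> A \<longleftrightarrow> b \<in> C)}) =
          ((a', b) \<in> {(a,b). a < 4 \<and> b < 4 \<and> (a \<in> A \<longleftrightarrow> b \<in> C)})) =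
         (((a, b') \<in> {(a,b). a < 4 \<and> b < 4 \<and> (a \<in> A \<longleftrightarrow> b \<in> C)}) =
          ((a', b') \<in> {(a,b). a < 4 \<and> b < 4 \<and> (a \<in> A \<longleftrightarrow> b \<in> C)}))"
    by (cases "a \<in> A"; cases "a' \<in> A"; cases "b \<in> C"; cases "b' \<in> C") simp_all
qed

lemma cut_splitx:
  assumes M: "double_MDS_code n S" and T: "lineclosed n S T" and x: "x \<in> words n"
    and ij: "i < n" "j < n" "i \<noteq> j" and ct: "cutp S T i j x"
  shows "splitx S i j x"
proof -
  obtain A C where Q: "PL S i j x = {(a,b). a < 4 \<and> b < 4 \<and> (a \<in> A \<longleftrightarrow> b \<in> C)}"
    using cut_struct[OF assms] by (elim exE conjE) (rule that; assumption)
  show ?thesis unfolding splitx_def Q by (rule splitP_AC)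
qed

lemma L_main:
  assumes M: "double_MDS_code n S" and T: "lineclosed n S T"
    and ij: "i < n" "j < n" "i \<noteq> j" and ns: "\<exists>x\<in>words n. \<not> splitx S i j x"
  shows "\<forall>x\<in>words n. \<not> cutp S T i j x"
proof (rule ccontr)
  assume "\<not> ?thesis"
  then obtain w where w: "w \<in> words n" "cutp S T i j w" by blast
  obtain z where z: "z \<in> words n" "\<not> splitx S i j z" using ns by blast
  define D where "D = {x \<in> words n. cutp S T i j x}"
  define B where "B = {..<n} - {i,j}"
  have subw: "sub n w B i j = words n" unfolding sub_def B_def by auto
  have TS: "T \<subseteq> S" using T by (simp add: lineclosed_def)
  have lc: "\<And>u p c. u \<in> S \<Longrightarrow> p < n \<Longrightarrow> c < 4 \<Longrightarrow> u[p:=c] \<in> S \<Longrightarrow> (u \<in> T \<longleftrightarrow> u[p:=c] \<in> T)"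
    using T unfolding lineclosed_def by blast
  have cl: "closedD S i j D B"
    unfolding closedD_def
  proof (intro ballI allI impI)
    fix x k c assume xD: "x \<in> D" and k: "k \<in> B" and c: "c < 4"
      and ne: "PL S i j (x[k:=c]) \<noteq> U4 - PL S i j x"
    have x: "x \<in> words n" "cutp S T i j x" using xD by (auto simp: D_def)
    have kn: "k < n" "k \<noteq> i" "k \<noteq> j" using k by (auto simp: B_def)
    obtain A C where AC: "A \<subseteq> {..<4}" "C \<subseteq> {..<4}" "card A = 2" "card C = 2"
      and Q: "PL S i j x = {(a,b). a < 4 \<and> b < 4 \<and> (a \<in> A \<longleftrightarrow> b \<in> C)}"
      and R: "{(a,b). a < 4 \<and> b < 4 \<and> x[i:=a, j:=b] \<in> T} = {(a,b). a < 4 \<and> b < 4 \<and> a \<in> A \<and> b \<in> C}"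
      using cut_struct[OF M T x(1) ij x(2)] by (elim exE conjE) (rule that; assumption)
    have xc: "x[k:=c] \<in> words n" using words_upd[OF x(1) c] .
    have regP: "reg2 (PL S i j (x[k:=c]))" using reg2_PL[OF M xc ij] .
    have compQ: "U4 - PL S i j x = {(a,b). a < 4 \<and> b < 4 \<and> (a \<in> A \<longleftrightarrow> b \<notin> C)}"
      unfolding Q U4_def by auto
    have m1: "\<exists>a b. a < 4 \<and> b < 4 \<and> a \<in> A \<and> b \<in> C \<and> (a,b) \<in> PL S i j (x[k:=c])"
    proof (rule ccontr)
      assume "\<not> ?thesis"
      then have av: "\<And>a b. a < 4 \<Longrightarrow> b < 4 \<Longrightarrow> a \<notin> {..<4} - A \<Longrightarrow> b \<notin> {..<4} - C \<Longrightarrow> (a,b) \<notin> PL S i j (x[k:=c])"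
        by auto
      have "card ({..<4} - A) = 2" "card ({..<4} - C) = 2" using card_compl4 AC by auto
      from L2[OF regP _ _ this av]
      have "PL S i j (x[k:=c]) = {(a,b). a < 4 \<and> b < 4 \<and> (a \<in> {..<4} - A \<longleftrightarrow> b \<notin> {..<4} - C)}" by auto
      also have "\<dots> = U4 - PL S i j x" unfolding compQ by auto
      finally show False using ne by simp
    qed
    have m2: "\<exists>a b. a < 4 \<and> b < 4 \<and> a \<notin> A \<and> b \<notin> C \<and> (a,b) \<in> PL S i j (x[k:=c])"
    proof (rule ccontr)
      assume "\<not> ?thesis"
      then have av: "\<And>a b. a < 4 \<Longrightarrow> b < 4 \<Longrightarrow> a \<notin> A \<Longrightarrow> b \<notin> C \<Longrightarrow> (a,b) \<notin> PL S i j (x[k:=c])"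
        by auto
      from L2[OF regP AC av]
      have "PL S i j (x[k:=c]) = U4 - PL S i j x" unfolding compQ by simp
      then show False using ne by simp
    qed
    obtain a b where ab: "a < 4" "b < 4" "a \<in> A" "b \<in> C" "(a,b) \<in> PL S i j (x[k:=c])" using m1 by blast
    obtain a' b' where ab': "a' < 4" "b' < 4" "a' \<notin> A" "b' \<notin> C" "(a',b') \<in> PL S i j (x[k:=c])" using m2 by blast
    have e1: "x[k:=c, i:=a, j:=b] = x[i:=a, j:=b, k:=c]" by (rule upd_comm[OF kn(2) kn(3)])
    have e2: "x[k:=c, i:=a', j:=b'] = x[i:=a', j:=b', k:=c]" by (rule upd_comm[OF kn(2) kn(3)])
    have t1: "x[i:=a, j:=b] \<in> T" using R ab by blast
    have s1: "x[i:=a, j:=b, k:=c] \<in> S" using ab(5) e1 by (simp add: PL_def)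
    have "x[i:=a, j:=b, k:=c] \<in> T" using lc[OF _ kn(1) c s1] t1 TS by blast
    then have T1: "x[k:=c, i:=a, j:=b] \<in> T" using e1 by simp
    have s2: "x[i:=a', j:=b'] \<in> S" using Q ab' by (auto simp: PL_def)
    have t2: "x[i:=a', j:=b'] \<notin> T" using R ab' by blast
    have s2': "x[i:=a', j:=b', k:=c] \<in> S" using ab'(5) e2 by (simp add: PL_def)
    have "x[i:=a', j:=b', k:=c] \<notin> T" using lc[OF s2 kn(1) c s2'] t2 by blast
    then have T2: "x[k:=c, i:=a', j:=b'] \<in> S - T" using e2 s2' by simp
    have "cutp S T i j (x[k:=c])" unfolding cutp_def using T1 T2 ab ab' by blast
    then show "x[k:=c] \<in> D" using xc by (simp add: D_def)
  qed
  have "splitx S i j z"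
  proof (rule claimY[OF M ij, of B w D z])
    show "finite B" by (simp add: B_def)
    show "B \<subseteq> {..<n} - {i, j}" by (simp add: B_def)
    show "w \<in> words n" by (rule w(1))
    show "D \<subseteq> sub n w B i j" unfolding subw D_def by auto
    show "D \<noteq> {}" using w by (auto simp: D_def)
    show "closedD S i j D B" by (rule cl)
    show "\<forall>x\<in>D. splitx S i j x" using cut_splitx[OF M T _ ij] by (auto simp: D_def)
    show "z \<in> sub n w B i j" using z subw by simp
  qed
  then show False using z by simp
qed

lemma adjacent_upd:
  assumes "p < length u" "u[p:=c] \<noteq> u"
  shows "adjacent u (u[p:=c])"
proof -
  have cp: "c \<noteq> u ! p" using assms by auto
  have "{i. i < length u \<and> u ! i \<noteq> u[p:=c] ! i} = {p}"
    using assms cp by (auto simp: nth_list_update)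
  then show ?thesis unfolding adjacent_def by simp
qed

lemma adjacent_sym: "adjacent x y \<Longrightarrow> adjacent y x"
proof -
  assume h: "adjacent x y"
  then have l: "length x = length y" by (simp add: adjacent_def)
  have "{i. i < length y \<and> y ! i \<noteq> x ! i} = {i. i < length x \<and> x ! i \<noteq> y ! i}" using l by auto
  then show ?thesis using h l by (simp add: adjacent_def)
qed

lemma adj_in_sym: "adj_in S x y \<Longrightarrow> adj_in S y x"
  unfolding adj_in_def using adjacent_sym by blast

lemma comp_lineclosed:
  assumes SW: "S \<subseteq> words n"
  shows "lineclosed n S {y\<in>S. (adj_in S)\<^sup>*\<^sup>* x0 y}"
  unfolding lineclosed_def
proof (intro conjI ballI allI impI)
  show "{y \<in> S. (adj_in S)\<^sup>*\<^sup>* x0 y} \<subseteq> S" by blast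
next
  fix u p c assume u: "u \<in> S" and p: "p < n" and c: "c < 4" and uc: "u[p:=c] \<in> S"
  show "(u \<in> {y \<in> S. (adj_in S)\<^sup>*\<^sup>* x0 y}) = (u[p:=c] \<in> {y \<in> S. (adj_in S)\<^sup>*\<^sup>* x0 y})"
  proof (cases "u[p:=c] = u")
    case True then show ?thesis by simp
  next
    case False
    have pl: "p < length u" using u SW p by (auto simp: words_len)
    have a1: "adj_in S u (u[p:=c])" unfolding adj_in_def using u uc adjacent_upd[OF pl False] by blast
    have a2: "adj_in S (u[p:=c]) u" using adj_in_sym[OF a1] .
    show ?thesis
    proof
      assume "u \<in> {y \<in> S. (adj_in S)\<^sup>*\<^sup>* x0 y}"
      then show "u[p:=c] \<in> {y \<in> S. (adj_in S)\<^sup>*\<^sup>* x0 y}" using a1 uc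
        by (auto intro: rtranclp.rtrancl_into_rtrancl)
    next
      assume "u[p:=c] \<in> {y \<in> S. (adj_in S)\<^sup>*\<^sup>* x0 y}"
      then show "u \<in> {y \<in> S. (adj_in S)\<^sup>*\<^sup>* x0 y}" using a2 u
        by (auto intro: rtranclp.rtrancl_into_rtrancl)
    qed
  qed
qed

lemma upd_self2: "r < length z \<Longrightarrow> q \<noteq> r \<Longrightarrow> z[q:=c, r:=z!r] = z[q:=c]"
  by (metis list_update_id list_update_swap)

lemma conn_main:
  assumes M: "double_MDS_code n S" and n0: "0 < n"
    and G: "\<forall>r<n. (gam S n)\<^sup>*\<^sup>* 0 r"
    and x: "x \<in> S" and y: "y \<in> S"
  shows "(adj_in S)\<^sup>*\<^sup>* x y"
proof -
  have SW: "S \<subseteq> words n" using M by (simp add: MDS_iff)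
  define T where "T = {y\<in>S. (adj_in S)\<^sup>*\<^sup>* x y}"
  have TL: "lineclosed n S T" unfolding T_def by (rule comp_lineclosed[OF SW])
  have TS: "T \<subseteq> S" by (auto simp: T_def)
  have lc: "\<And>u p c. u \<in> S \<Longrightarrow> p < n \<Longrightarrow> c < 4 \<Longrightarrow> u[p:=c] \<in> S \<Longrightarrow> (u \<in> T \<longleftrightarrow> u[p:=c] \<in> T)"
    using TL unfolding lineclosed_def by blast
  define h where "h q z = (\<exists>c<4. z[q:=c] \<in> T)" for q z
  have ex2: "\<exists>c<4. z[r:=c] \<in> S" if "z \<in> words n" "r < n" for z r
  proof (rule ccontr)
    assume "\<not> ?thesis"
    then have e: "{c. c < 4 \<and> z[r:=c] \<in> S} = {}" by auto
    show False using mds_cnt[OF M that, unfolded cnt_def, unfolded e] by simp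
  qed
  have heq: "h q z = h r z" if g: "gam S n q r" and z: "z \<in> words n" for q r z
  proof -
    have qr: "q < n" "r < n" "q \<noteq> r" and ns: "\<exists>x\<in>words n. \<not> splitx S q r x" using g by (auto simp: gam_def)
    have nc: "\<not> cutp S T q r z" using L_main[OF M TL qr ns] z by blast
    have zl: "length z = n" using z words_len by blast
    have zq: "z ! q < 4" and zr: "z ! r < 4" using z qr words_nth by auto
    show ?thesis
    proof
      assume "h q z"
      then obtain c where c: "c < 4" "z[q:=c] \<in> T" by (auto simp: h_def)
      show "h r z"
      proof (rule ccontr)
        assume nh: "\<not> h r z"
        obtain c' where c': "c' < 4" "z[r:=c'] \<in> S" using ex2[OF z qr(2)] by blast
        have "z[r:=c'] \<notin> T" using nh c' by (auto simp: h_def)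
        then have m2: "z[q:=z!q, r:=c'] \<in> S - T" using c' by simp
        have m1: "z[q:=c, r:=z!r] \<in> T" using upd_self2[of r z q c] zl qr c by simp
        have "cutp S T q r z" unfolding cutp_def using m1 m2 c(1) c'(1) zq zr by blast
        then show False using nc by simp
      qed
    next
      assume "h r z"
      then obtain c where c: "c < 4" "z[r:=c] \<in> T" by (auto simp: h_def)
      show "h q z"
      proof (rule ccontr)
        assume nh: "\<not> h q z"
        obtain c' where c': "c' < 4" "z[q:=c'] \<in> S" using ex2[OF z qr(1)] by blast
        have "z[q:=c'] \<notin> T" using nh c' by (auto simp: h_def)
        then have m2: "z[q:=c', r:=z!r] \<in> S - T" using upd_self2[of r z q c'] zl qr c' by simp
        have m1: "z[q:=z!q, r:=c] \<in> T" using c by simp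
        have "cutp S T q r z" unfolding cutp_def using m1 m2 c(1) c'(1) zq zr by blast
        then show False using nc by simp
      qed
    qed
  qed
  have h0q: "\<forall>z\<in>words n. h 0 z = h q z" if "(gam S n)\<^sup>*\<^sup>* 0 q" for q
    using that
  proof (induction rule: rtranclp_induct)
    case base then show ?case by simp
  next
    case (step q r) then show ?case using heq by blast
  qed
  have hinv: "h 0 (z[q:=c]) = h 0 z" if z: "z \<in> words n" and q: "q < n" and c: "c < 4" for z q c
  proof -
    have "h q (z[q:=c]) = h q z" by (simp add: h_def)
    moreover have "z[q:=c] \<in> words n" using words_upd[OF z c] .
    ultimately show ?thesis using h0q G q z by metis
  qed
  have hconst: "\<forall>z. z \<in> words n \<longrightarrow> card {p. p < n \<and> z ! p \<noteq> x ! p} = d \<longrightarrow> h 0 z = h 0 x" for d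
  proof (induction d)
    case 0
    show ?case
    proof (intro allI impI)
      fix z assume z: "z \<in> words n" and c0: "card {p. p < n \<and> z ! p \<noteq> x ! p} = 0"
      have "{p. p < n \<and> z ! p \<noteq> x ! p} = {}" using c0 by simp
      moreover have "length z = n" "length x = n" using z x SW by (auto simp: words_len)
      ultimately have "z = x" by (metis (mono_tags, lifting) empty_Collect_eq nth_equalityI)
      then show "h 0 z = h 0 x" by simp
    qed
  next
    case (Suc d)
    show ?case
    proof (intro allI impI)
      fix z assume z: "z \<in> words n" and cS: "card {p. p < n \<and> z ! p \<noteq> x ! p} = Suc d"
      have ne: "{p. p < n \<and> z ! p \<noteq> x ! p} \<noteq> {}"
      proof
        assume e: "{p. p < n \<and> z ! p \<noteq> x ! p} = {}" show False using cS[unfolded e] by simp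
      qed
      then obtain p where p: "p < n" "z ! p \<noteq> x ! p" by blast
      have xw: "x \<in> words n" using x SW by auto
      have xp: "x ! p < 4" using xw p words_nth by blast
      have zl: "length z = n" using z words_len by blast
      let ?z = "z[p := x ! p]"
      have zw: "?z \<in> words n" using words_upd[OF z xp] .
      have "{p'. p' < n \<and> ?z ! p' \<noteq> x ! p'} = {p'. p' < n \<and> z ! p' \<noteq> x ! p'} - {p}"
        using zl p by (auto simp: nth_list_update)
      then have "card {p'. p' < n \<and> ?z ! p' \<noteq> x ! p'} = d" using cS p by simp
      then have "h 0 ?z = h 0 x" using Suc.IH zw by blast
      moreover have "h 0 (?z[p := z ! p]) = h 0 ?z" using hinv[OF zw p(1)] z p words_nth by blast
      moreover have "?z[p := z ! p] = z" by simp
      ultimately show "h 0 z = h 0 x" by simp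
    qed
  qed
  have xl: "length x = n" using x SW by (auto simp: words_len)
  have "x[0 := x ! 0] \<in> T" using x by (simp add: T_def)
  moreover have "x ! 0 < 4" using x SW n0 words_nth by blast
  ultimately have hx: "h 0 x" by (auto simp: h_def)
  have yw: "y \<in> words n" using y SW by auto
  have "h 0 y" using hconst hx yw by blast
  then obtain c where c: "c < 4" "y[0:=c] \<in> T" by (auto simp: h_def)
  then have "y \<in> T" using lc[OF y n0 c(1)] TS by blast
  then show ?thesis by (simp add: T_def)
qed




definition rank :: "nat set \<Rightarrow> nat \<Rightarrow> nat" where
  "rank K p = card {q\<in>K. q < p}"

lemma card_lt_Suc:
  "card {q\<in>K. q < Suc p} = (if 0 \<in> K then 1 else 0) + card {q\<in>{j. Suc j \<in> K}. q < p}"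
proof -
  have e: "{q\<in>K. q < Suc p} = ({0} \<inter> K) \<union> Suc ` {q\<in>{j. Suc j \<in> K}. q < p}"
    by (auto simp: image_iff less_Suc_eq_0_disj)
  have d: "({0} \<inter> K) \<inter> Suc ` {q\<in>{j. Suc j \<in> K}. q < p} = {}" by auto
  have f: "finite (Suc ` {q\<in>{j. Suc j \<in> K}. q < p})" by simp
  have "card {q\<in>K. q < Suc p} = card ({0} \<inter> K) + card (Suc ` {q\<in>{j. Suc j \<in> K}. q < p})"
    unfolding e using d f by (simp add: card_Un_disjoint)
  also have "card (Suc ` {q\<in>{j. Suc j \<in> K}. q < p}) = card {q\<in>{j. Suc j \<in> K}. q < p}"
    by (simp add: card_image)
  also have "card ({0} \<inter> K) = (if 0 \<in> K then 1 else 0)" by auto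
  finally show ?thesis .
qed

lemma nths_nth_rank: "p \<in> K \<Longrightarrow> p < length xs \<Longrightarrow> nths xs K ! rank K p = xs ! p"
proof (induction xs arbitrary: K p)
  case Nil then show ?case by simp
next
  case (Cons y ys)
  show ?case
  proof (cases p)
    case 0
    then have "rank K p = 0" by (simp add: rank_def)
    then show ?thesis using Cons.prems 0 by (simp add: nths_Cons)
  next
    case (Suc p')
    have p': "p' \<in> {j. Suc j \<in> K}" "p' < length ys" using Cons.prems Suc by auto
    have r: "rank K p = (if 0 \<in> K then 1 else 0) + rank {j. Suc j \<in> K} p'"
      unfolding rank_def Suc by (rule card_lt_Suc)
    have ih: "nths ys {j. Suc j \<in> K} ! rank {j. Suc j \<in> K} p' = ys ! p'" using Cons.IH[OF p'] .
    show ?thesis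
    proof (cases "0 \<in> K")
      case True
      have "nths (y # ys) K = y # nths ys {j. Suc j \<in> K}" using True by (simp add: nths_Cons)
      moreover have "rank K p = Suc (rank {j. Suc j \<in> K} p')" using r True by simp
      ultimately show ?thesis using ih Suc by simp
    next
      case False
      have "nths (y # ys) K = nths ys {j. Suc j \<in> K}" using False by (simp add: nths_Cons)
      moreover have "rank K p = rank {j. Suc j \<in> K} p'" using r False by simp
      ultimately show ?thesis using ih Suc by simp
    qed
  qed
qed

lemma length_nths_sub: "K \<subseteq> {..<length xs} \<Longrightarrow> length (nths xs K) = card K"
proof -
  assume K: "K \<subseteq> {..<length xs}"
  have "{i. i < length xs \<and> i \<in> K} = K" using K by auto
  then show ?thesis by (simp add: length_nths)
qed

lemma rank_bij: assumes "finite K" shows "bij_betw (rank K) K {..<card K}"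
proof -
  have lt: "rank K p < rank K p'" if "p \<in> K" "p' \<in> K" "p < p'" for p p'
  proof -
    have "{q\<in>K. q < p} \<subset> {q\<in>K. q < p'}" using that by auto
    then show ?thesis unfolding rank_def using assms by (simp add: psubset_card_mono)
  qed
  have inj: "inj_on (rank K) K"
  proof
    fix p p' assume "p \<in> K" "p' \<in> K" "rank K p = rank K p'"
    then show "p = p'" using lt by (metis less_irrefl linorder_neqE_nat)
  qed
  have sub: "rank K ` K \<subseteq> {..<card K}"
  proof
    fix r assume "r \<in> rank K ` K"
    then obtain p where p: "p \<in> K" "r = rank K p" by blast
    have "{q\<in>K. q < p} \<subset> K" using p by auto
    then show "r \<in> {..<card K}" using p assms unfolding rank_def by (simp add: psubset_card_mono)
  qed
  have "card (rank K ` K) = card {..<card K}" using card_image[OF inj] by simp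
  then have "rank K ` K = {..<card K}" using sub by (simp add: card_subset_eq)
  then show ?thesis using inj by (simp add: bij_betw_def)
qed

definition pos :: "nat set \<Rightarrow> nat \<Rightarrow> nat" where
  "pos K r = inv_into K (rank K) r"

lemma pos_props: assumes "finite K" "r < card K"
  shows "pos K r \<in> K" "rank K (pos K r) = r"
proof -
  have b: "bij_betw (rank K) K {..<card K}" using rank_bij[OF assms(1)] .
  have "r \<in> rank K ` K" using b assms(2) by (simp add: bij_betw_def)
  then show "pos K r \<in> K" "rank K (pos K r) = r" unfolding pos_def
    by (auto intro: inv_into_into f_inv_into_f)
qed

lemma pos_rank: assumes "finite K" "p \<in> K" shows "pos K (rank K p) = p"
  using rank_bij[OF assms(1)] assms(2) unfolding pos_def by (simp add: bij_betw_def)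

lemma rank_lt: assumes "finite K" "p \<in> K" shows "rank K p < card K"
  using rank_bij[OF assms(1)] assms(2) by (auto simp: bij_betw_def)

lemma rank_inj: assumes "finite K" "p \<in> K" "q \<in> K" "rank K p = rank K q" shows "p = q"
  using rank_bij[OF assms(1)] assms(2-4) by (auto simp: bij_betw_def inj_on_def)

lemma nths_eq_iff:
  assumes l: "length xs = length ys" and K: "K \<subseteq> {..<length xs}"
  shows "nths xs K = nths ys K \<longleftrightarrow> (\<forall>p\<in>K. xs ! p = ys ! p)"
proof
  assume e: "nths xs K = nths ys K"
  show "\<forall>p\<in>K. xs ! p = ys ! p"
  proof
    fix p assume p: "p \<in> K"
    have pl: "p < length xs" using p K by auto
    have "xs ! p = nths xs K ! rank K p" using nths_nth_rank[OF p pl] by simp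
    also have "\<dots> = nths ys K ! rank K p" using e by simp
    also have "\<dots> = ys ! p" using nths_nth_rank[OF p] pl l by simp
    finally show "xs ! p = ys ! p" .
  qed
next
  assume h: "\<forall>p\<in>K. xs ! p = ys ! p"
  have fK: "finite K" using K finite_subset by blast
  show "nths xs K = nths ys K"
  proof (rule nth_equalityI)
    show "length (nths xs K) = length (nths ys K)" using length_nths_sub[of K xs] length_nths_sub[of K ys] K l by simp
    fix r assume r: "r < length (nths xs K)"
    then have rc: "r < card K" using length_nths_sub[OF K] by simp
    have q: "pos K r \<in> K" "rank K (pos K r) = r" using pos_props[OF fK rc] by auto
    have ql: "pos K r < length xs" using q K by auto
    have "nths xs K ! r = xs ! pos K r" using nths_nth_rank[OF q(1) ql] q(2) by simp
    moreover have "nths ys K ! r = ys ! pos K r" using nths_nth_rank[OF q(1)] ql l q(2) by simp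
    ultimately show "nths xs K ! r = nths ys K ! r" using h q(1) by simp
  qed
qed

lemma nths_upd_out: "p \<notin> K \<Longrightarrow> K \<subseteq> {..<length xs} \<Longrightarrow> nths (xs[p:=a]) K = nths xs K"
proof -
  assume p: "p \<notin> K" and K: "K \<subseteq> {..<length xs}"
  have "\<forall>q\<in>K. xs[p:=a] ! q = xs ! q"
  proof
    fix q assume "q \<in> K" then have "q \<noteq> p" using p by auto
    then show "xs[p:=a] ! q = xs ! q" by simp
  qed
  then show ?thesis using nths_eq_iff[of "xs[p:=a]" xs K] K by simp
qed

lemma nths_upd_in:
  assumes p: "p \<in> K" and K: "K \<subseteq> {..<length xs}"
  shows "nths (xs[p:=a]) K = (nths xs K)[rank K p := a]"
proof (rule nth_equalityI)
  have fK: "finite K" using K finite_subset by blast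
  show "length (nths (xs[p:=a]) K) = length ((nths xs K)[rank K p := a])"
    using length_nths_sub[of K "xs[p:=a]"] length_nths_sub[of K xs] K by simp
  fix r assume r: "r < length (nths (xs[p:=a]) K)"
  then have rc: "r < card K" using length_nths_sub[of K "xs[p:=a]"] K by simp
  have q: "pos K r \<in> K" "rank K (pos K r) = r" using pos_props[OF fK rc] by auto
  have ql: "pos K r < length xs" using q K by auto
  have "nths (xs[p:=a]) K ! r = xs[p:=a] ! pos K r"
    using nths_nth_rank[of "pos K r" K "xs[p:=a]"] q ql by simp
  also have "\<dots> = (if pos K r = p then a else xs ! pos K r)" using ql by (simp add: nth_list_update)
  also have "\<dots> = (if r = rank K p then a else nths xs K ! r)"
  proof -
    have "pos K r = p \<longleftrightarrow> r = rank K p" using q rank_inj[OF fK q(1) p] by metis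
    moreover have "nths xs K ! r = xs ! pos K r" using nths_nth_rank[OF q(1) ql] q(2) by simp
    ultimately show ?thesis by simp
  qed
  also have "\<dots> = (nths xs K)[rank K p := a] ! r"
    using rc length_nths_sub[of K xs] K by (simp add: nth_list_update)
  finally show "nths (xs[p:=a]) K ! r = (nths xs K)[rank K p := a] ! r" .
qed

lemma nths_words: "x \<in> words n \<Longrightarrow> K \<subseteq> {..<n} \<Longrightarrow> nths x K \<in> words (card K)"
  unfolding words_def using length_nths_sub[of K x] set_nths_subset[of x K] by auto

definition liftb :: "nat list \<Rightarrow> nat set \<Rightarrow> nat list \<Rightarrow> nat list" where
  "liftb u K z = map (\<lambda>p. if p \<in> K then z ! rank K p else u ! p) [0..<length u]"

lemma liftb_len[simp]: "length (liftb u K z) = length u"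
  by (simp add: liftb_def)

lemma liftb_nth: "p < length u \<Longrightarrow> liftb u K z ! p = (if p \<in> K then z ! rank K p else u ! p)"
  by (simp add: liftb_def)

lemma liftb_words:
  assumes u: "u \<in> words n" and z: "z \<in> words (card K)" and K: "K \<subseteq> {..<n}"
  shows "liftb u K z \<in> words n"
proof -
  have fK: "finite K" using K finite_subset by blast
  have "liftb u K z ! p < 4" if "p < n" for p
  proof (cases "p \<in> K")
    case True
    then have "rank K p < card K" using rank_lt[OF fK] by blast
    then show ?thesis using True z that u by (simp add: liftb_nth words_len words_nth)
  next
    case False then show ?thesis using that u by (simp add: liftb_nth words_len words_nth)
  qed
  moreover have "length (liftb u K z) = n" using u by (simp add: words_len)
  ultimately show ?thesis unfolding words_iff by blast
qed

lemma nths_liftb: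
  assumes K: "K \<subseteq> {..<length u}" and z: "length z = card K"
  shows "nths (liftb u K z) K = z"
proof (rule nth_equalityI)
  have fK: "finite K" using K finite_subset by blast
  show "length (nths (liftb u K z) K) = length z" using length_nths_sub[of K "liftb u K z"] K z by simp
  fix r assume r: "r < length (nths (liftb u K z) K)"
  then have rc: "r < card K" using length_nths_sub[of K "liftb u K z"] K by simp
  have q: "pos K r \<in> K" "rank K (pos K r) = r" using pos_props[OF fK rc] by auto
  have ql: "pos K r < length u" using q K by auto
  have "nths (liftb u K z) K ! r = liftb u K z ! pos K r"
    using nths_nth_rank[of "pos K r" K "liftb u K z"] q ql by simp
  also have "\<dots> = z ! r" using ql q by (simp add: liftb_nth)
  finally show "nths (liftb u K z) K ! r = z ! r" .
qed

lemma liftb_nths: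
  assumes l: "length x = length u" and K: "K \<subseteq> {..<length u}"
    and ag: "\<And>p. p < length u \<Longrightarrow> p \<notin> K \<Longrightarrow> x ! p = u ! p"
  shows "liftb u K (nths x K) = x"
proof (rule nth_equalityI)
  show "length (liftb u K (nths x K)) = length x" using l by simp
  fix p assume p: "p < length (liftb u K (nths x K))"
  then have pl: "p < length u" by simp
  show "liftb u K (nths x K) ! p = x ! p"
  proof (cases "p \<in> K")
    case True
    have "nths x K ! rank K p = x ! p" using nths_nth_rank[OF True, of x] pl l by simp
    then show ?thesis using pl True by (simp add: liftb_nth)
  next
    case False then show ?thesis using pl ag by (simp add: liftb_nth)
  qed
qed

lemma liftb_upd:
  assumes K: "K \<subseteq> {..<length u}" and r: "r < card K" and zl: "length z = card K"
  shows "liftb u K (z[r:=a]) = (liftb u K z)[pos K r := a]"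
proof (rule nth_equalityI)
  have fK: "finite K" using K finite_subset by blast
  have q: "pos K r \<in> K" "rank K (pos K r) = r" using pos_props[OF fK r] by auto
  show "length (liftb u K (z[r:=a])) = length ((liftb u K z)[pos K r := a])" by simp
  fix p assume p: "p < length (liftb u K (z[r:=a]))"
  then have pl: "p < length u" by simp
  show "liftb u K (z[r:=a]) ! p = (liftb u K z)[pos K r := a] ! p"
  proof (cases "p \<in> K")
    case True
    have "rank K p = r \<longleftrightarrow> p = pos K r" using q rank_inj[OF fK True q(1)] by metis
    moreover have "rank K p < card K" using rank_lt[OF fK True] .
    ultimately show ?thesis using True pl q zl r
      by (auto simp: liftb_nth nth_list_update)
  next
    case False
    then have "p \<noteq> pos K r" using q by auto
    then show ?thesis using False pl by (simp add: liftb_nth nth_list_update)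
  qed
qed

section \<open>adjacency and primality\<close>

lemma adjacent_iff_upd:
  assumes "adjacent x y"
  shows "\<exists>p<length x. y = x[p := y ! p] \<and> x ! p \<noteq> y ! p"
proof -
  have l: "length x = length y" and c: "card {i. i < length x \<and> x ! i \<noteq> y ! i} = 1"
    using assms by (auto simp: adjacent_def)
  then obtain p where p: "{i. i < length x \<and> x ! i \<noteq> y ! i} = {p}" using card_1_singletonE by blast
  then have pl: "p < length x" "x ! p \<noteq> y ! p" by auto
  have "y = x[p := y ! p]"
  proof (rule nth_equalityI)
    show "length y = length (x[p := y ! p])" using l by simp
    fix i assume i: "i < length y"
    show "y ! i = x[p := y ! p] ! i"
    proof (cases "i = p")
      case True then show ?thesis using pl by simp
    next
      case False
      then have "i \<notin> {i. i < length x \<and> x ! i \<noteq> y ! i}" using p by auto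
      then show ?thesis using False i l by (auto simp: nth_list_update)
    qed
  qed
  then show ?thesis using pl by blast
qed

lemma dc_step:
  assumes M: "double_MDS_code n S" and T: "double_code n T" and TS: "T \<subseteq> S"
    and u: "u \<in> T" and v: "v \<in> S" and adj: "adjacent u v"
  shows "v \<in> T"
proof -
  have SW: "S \<subseteq> words n" using M by (simp add: MDS_iff)
  have uw: "u \<in> words n" using u TS SW by auto
  have vw: "v \<in> words n" using v SW by auto
  obtain p where p: "p < length u" "v = u[p := v ! p]" "u ! p \<noteq> v ! p" using adjacent_iff_upd[OF adj] by blast
  have pn: "p < n" using p uw by (simp add: words_len)
  have ct: "cnt T u p = 0 \<or> cnt T u p = 2" using T uw pn by (simp add: DC_iff)
  have cs: "cnt S u p = 2" using mds_cnt[OF M uw pn] .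
  have up: "u ! p < 4" using uw pn words_nth by blast
  have vp: "v ! p < 4" using vw pn words_nth[of v n p] by (simp add: words_len)
  have inT: "u ! p \<in> {a. a < 4 \<and> u[p:=a] \<in> T}" using up u by simp
  have fT: "finite {a::nat. a < 4 \<and> u[p:=a] \<in> T}" by simp
  have "cnt T u p \<noteq> 0" unfolding cnt_def using inT fT by (metis card_0_eq empty_iff)
  then have c2: "cnt T u p = 2" using ct by simp
  have sub: "{a. a < 4 \<and> u[p:=a] \<in> T} \<subseteq> {a. a < 4 \<and> u[p:=a] \<in> S}" using TS by auto
  have eq: "{a. a < 4 \<and> u[p:=a] \<in> T} = {a. a < 4 \<and> u[p:=a] \<in> S}"
    using card_subset_eq[OF _ sub] c2 cs by (simp add: cnt_def)
  have "v ! p \<in> {a. a < 4 \<and> u[p:=a] \<in> S}" using vp v p(2) by simp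
  then have "u[p := v ! p] \<in> T" using eq by blast
  then show ?thesis using p(2) by simp
qed

lemma prime_of_conn:
  assumes M: "double_MDS_code n S" and ne: "S \<noteq> {}"
    and C: "\<forall>x\<in>S. \<forall>y\<in>S. (adj_in S)\<^sup>*\<^sup>* x y"
  shows "prime_code n S"
proof -
  have dc: "double_code n S" using M by (simp add: MDS_iff DC_iff)
  have comp: "complementable n S" using dc M by (auto simp: complementable_def)
  have full: "T = S" if T: "double_code n T" "T \<subseteq> S" "T \<noteq> {}" for T
  proof -
    obtain t where t: "t \<in> T" using T(3) by blast
    have "y \<in> T" if y: "y \<in> S" for y
    proof -
      have "(adj_in S)\<^sup>*\<^sup>* t y" using C t T(2) y by blast
      then show "y \<in> T"
      proof (induction rule: rtranclp_induct)
        case base then show ?case using t .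
      next
        case (step a b)
        then show ?case using dc_step[OF M T(1) T(2)] by (auto simp: adj_in_def)
      qed
    qed
    then show ?thesis using T(2) by blast
  qed
  have "\<not> (\<exists>P. partition_on S P \<and> card P \<ge> 2 \<and> (\<forall>T\<in>P. double_code n T))"
  proof
    assume "\<exists>P. partition_on S P \<and> card P \<ge> 2 \<and> (\<forall>T\<in>P. double_code n T)"
    then obtain P where P: "partition_on S P" "card P \<ge> 2" "\<forall>T\<in>P. double_code n T" by blast
    have fP: "finite P" using P(2) card.infinite by fastforce
    obtain T1 T2 where T12: "T1 \<in> P" "T2 \<in> P" "T1 \<noteq> T2"
      using P(2) fP by (metis One_nat_def card_le_Suc0_iff_eq not_less_eq_eq numeral_2_eq_2)
    have "T1 = S" using full P(3) T12(1) P(1) by (auto simp: partition_on_def)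
    moreover have "T2 = S" using full P(3) T12(2) P(1) by (auto simp: partition_on_def)
    ultimately show False using T12(3) by simp
  qed
  then show ?thesis using comp ne by (simp add: prime_code_def)
qed




section \<open>Symmetry of the coordinate graph\<close>

lemma PL_swap: "i \<noteq> j \<Longrightarrow> ((a,b) \<in> PL S j i x) = ((b,a) \<in> PL S i j x)"
  by (auto simp: PL_def list_update_swap)

lemma splitP_T: "splitP P \<Longrightarrow> splitP {(b,a). (a,b) \<in> P}"
  unfolding splitP_def
proof (intro allI impI)
  fix a a' b b' :: nat
  assume h: "\<forall>a a' b b'. a < 4 \<longrightarrow> a' < 4 \<longrightarrow> b < 4 \<longrightarrow> b' < 4 \<longrightarrow>
      (((a,b) \<in> P \<longleftrightarrow> (a',b) \<in> P) \<longleftrightarrow> ((a,b') \<in> P \<longleftrightarrow> (a',b') \<in> P))"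
    and lt: "a < 4" "a' < 4" "b < 4" "b' < 4"
  have e: "((b,a) \<in> P \<longleftrightarrow> (b',a) \<in> P) \<longleftrightarrow> ((b,a') \<in> P \<longleftrightarrow> (b',a') \<in> P)"
    using h lt by blast
  show "(((a, b) \<in> {(b, a). (a, b) \<in> P}) = ((a', b) \<in> {(b, a). (a, b) \<in> P})) =
        (((a, b') \<in> {(b, a). (a, b) \<in> P}) = ((a', b') \<in> {(b, a). (a, b) \<in> P}))"
    using e by (cases "(b,a) \<in> P"; cases "(b',a) \<in> P"; cases "(b,a') \<in> P"; cases "(b',a') \<in> P") simp_all
qed

lemma PL_T: "i \<noteq> j \<Longrightarrow> PL S j i x = {(b,a). (a,b) \<in> PL S i j x}"
  using PL_swap by blast

lemma splitx_sym: assumes "i \<noteq> j" shows "splitx S i j x = splitx S j i x"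
proof
  assume "splitx S i j x"
  then show "splitx S j i x" unfolding splitx_def PL_T[OF assms] by (rule splitP_T)
next
  assume "splitx S j i x"
  then show "splitx S i j x" unfolding splitx_def PL_T[OF assms[symmetric]] by (rule splitP_T)
qed

lemma gam_sym: "gam S n i j \<Longrightarrow> gam S n j i"
  unfolding gam_def using splitx_sym by metis

lemma gam_rt_sym: "(gam S n)\<^sup>*\<^sup>* i j \<Longrightarrow> (gam S n)\<^sup>*\<^sup>* j i"
proof (induction rule: rtranclp_induct)
  case base then show ?case by simp
next
  case (step y z)
  then show ?case using gam_sym by (metis converse_rtranclp_into_rtranclp)
qed

lemma gam_rt_lt: "(gam S n)\<^sup>*\<^sup>* i j \<Longrightarrow> i < n \<Longrightarrow> j < n"
  by (induction rule: rtranclp_induct) (auto simp: gam_def)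

definition mixw :: "nat list \<Rightarrow> nat set \<Rightarrow> nat list \<Rightarrow> nat list" where
  "mixw u K x = map (\<lambda>p. if p \<in> K then x ! p else u ! p) [0..<length u]"

lemma mixw_len[simp]: "length (mixw u K x) = length u"
  by (simp add: mixw_def)

lemma mixw_nth: "p < length u \<Longrightarrow> mixw u K x ! p = (if p \<in> K then x ! p else u ! p)"
  by (simp add: mixw_def)

lemma mixw_words: "u \<in> words n \<Longrightarrow> x \<in> words n \<Longrightarrow> mixw u K x \<in> words n"
proof -
  assume u: "u \<in> words n" and x: "x \<in> words n"
  have "mixw u K x ! p < 4" if "p < n" for p
    using that u x by (simp add: mixw_nth words_len words_nth)
  moreover have "length (mixw u K x) = n" using u by (simp add: words_len)
  ultimately show ?thesis unfolding words_iff by blast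
qed

lemma mixw_id: "length x = length u \<Longrightarrow> (\<And>p. p < length u \<Longrightarrow> p \<in> K \<Longrightarrow> x ! p = u ! p) \<Longrightarrow> mixw u K x = u"
  by (intro nth_equalityI) (auto simp: mixw_nth)

lemma mixw_all: "length x = length u \<Longrightarrow> {..<length u} \<subseteq> K \<Longrightarrow> mixw u K x = x"
  by (intro nth_equalityI) (auto simp: mixw_nth)

lemma mixw_liftb:
  assumes "x \<in> words n" "u \<in> words n" "K \<subseteq> {..<n}"
  shows "mixw u K x = liftb u K (nths x K)"
proof (rule nth_equalityI)
  show "length (mixw u K x) = length (liftb u K (nths x K))" by simp
  fix p assume p: "p < length (mixw u K x)"
  then have pn: "p < n" using assms by (simp add: words_len)
  show "mixw u K x ! p = liftb u K (nths x K) ! p"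
  proof (cases "p \<in> K")
    case True
    have "nths x K ! rank K p = x ! p" using nths_nth_rank[OF True, of x] pn assms by (simp add: words_len)
    then show ?thesis using p True by (simp add: mixw_nth liftb_nth)
  next
    case False then show ?thesis using p by (simp add: mixw_nth liftb_nth)
  qed
qed

section \<open>Separation\<close>

lemma rect:
  assumes sp: "splitx S a b z" and ab: "a \<noteq> b" and zl: "a < length z" "b < length z"
    and za: "z ! a < 4" and zb: "z ! b < 4" and al: "\<alpha> < 4" and be: "\<beta> < 4"
  shows "((z \<in> S) = (z[a:=\<alpha>] \<in> S)) = ((z[b:=\<beta>] \<in> S) = (z[a:=\<alpha>, b:=\<beta>] \<in> S))"
proof -
  have h: "((z!a, z!b) \<in> PL S a b z \<longleftrightarrow> (\<alpha>, z!b) \<in> PL S a b z) \<longleftrightarrow>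
           ((z!a, \<beta>) \<in> PL S a b z \<longleftrightarrow> (\<alpha>, \<beta>) \<in> PL S a b z)"
    using sp za zb al be unfolding splitx_def splitP_def by blast
  have e1: "z[a:=z!a, b:=z!b] = z" by simp
  have e2: "z[a:=\<alpha>, b:=z!b] = z[a:=\<alpha>]"
  proof -
    have "z[a:=\<alpha>] ! b = z ! b" using ab by simp
    then show ?thesis by (metis list_update_id)
  qed
  have e3: "z[a:=z!a, b:=\<beta>] = z[b:=\<beta>]" by simp
  show ?thesis using h za zb al be unfolding PL_def using e1 e2 e3 by simp
qed

lemma bool4: fixes X X' Y Y' P Q :: bool
  shows "(X = X') = (Y = Y') \<Longrightarrow> (X' = P) = (Y' = Q) \<Longrightarrow> (X = P) = (Y = Q)"
  by (cases X; cases X'; cases Y; cases Y'; cases P; cases Q) simp_all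

lemma sep1:
  assumes cross: "\<forall>a\<in>A. \<forall>b\<in>B. \<forall>z\<in>words n. splitx S a b z"
    and AB: "A \<inter> B = {}" and Bn: "B \<subseteq> {..<n}"
    and q: "q \<in> words n" and a: "a \<in> A" "a < n" and al: "\<alpha> < 4"
  shows "\<forall>z. z \<in> words n \<longrightarrow> card {b\<in>B. q ! b \<noteq> z ! b} = d \<longrightarrow>
    ((z \<in> S) = (z[a:=\<alpha>] \<in> S)) = ((mixw z B q \<in> S) = ((mixw z B q)[a:=\<alpha>] \<in> S))"
proof (induction d)
  case 0
  show ?case
  proof (intro allI impI)
    fix z assume z: "z \<in> words n" and c: "card {b\<in>B. q ! b \<noteq> z ! b} = 0"
    have fB: "finite B" using Bn finite_subset by blast
    have "{b\<in>B. q ! b \<noteq> z ! b} = {}" using c fB by simp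
    then have "mixw z B q = z" using q z by (intro mixw_id) (auto simp: words_len)
    then show "((z \<in> S) = (z[a:=\<alpha>] \<in> S)) = ((mixw z B q \<in> S) = ((mixw z B q)[a:=\<alpha>] \<in> S))" by simp
  qed
next
  case (Suc d)
  show ?case
  proof (intro allI impI)
    fix z assume z: "z \<in> words n" and c: "card {b\<in>B. q ! b \<noteq> z ! b} = Suc d"
    have ne: "{b\<in>B. q ! b \<noteq> z ! b} \<noteq> {}"
    proof
      assume e: "{b\<in>B. q ! b \<noteq> z ! b} = {}" show False using c[unfolded e] by simp
    qed
    then obtain b where b: "b \<in> B" "q ! b \<noteq> z ! b" by blast
    have bn: "b < n" using b Bn by auto
    have ab: "a \<noteq> b" using a b AB by auto
    have zl: "length z = n" using z words_len by blast
    have qb: "q ! b < 4" using q bn words_nth by blast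
    define z' where "z' = z[b := q ! b]"
    have z'w: "z' \<in> words n" using words_upd[OF z qb] by (simp add: z'_def)
    have "{b'\<in>B. q ! b' \<noteq> z' ! b'} = {b'\<in>B. q ! b' \<noteq> z ! b'} - {b}"
      using zl bn by (auto simp: z'_def nth_list_update)
    then have "card {b'\<in>B. q ! b' \<noteq> z' ! b'} = d" using c b Bn finite_subset by (simp)
    then have ih: "((z' \<in> S) = (z'[a:=\<alpha>] \<in> S)) = ((mixw z' B q \<in> S) = ((mixw z' B q)[a:=\<alpha>] \<in> S))"
      using Suc.IH z'w by blast
    have m: "mixw z' B q = mixw z B q"
    proof (rule nth_equalityI)
      show "length (mixw z' B q) = length (mixw z B q)" by (simp add: z'_def)
      fix i assume i: "i < length (mixw z' B q)"
      show "mixw z' B q ! i = mixw z B q ! i"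
      proof (cases "i \<in> B")
        case True then show ?thesis using i by (simp add: z'_def mixw_nth)
      next
        case False
        then have "i \<noteq> b" using b(1) by auto
        then show ?thesis using i False by (simp add: z'_def mixw_nth)
      qed
    qed
    have r: "((z \<in> S) = (z[a:=\<alpha>] \<in> S)) = ((z[b:=q!b] \<in> S) = (z[a:=\<alpha>, b:=q!b] \<in> S))"
      using rect[OF _ ab _ _ _ _ al qb] cross a b z zl bn words_nth by auto
    have sw: "z'[a:=\<alpha>] = z[a:=\<alpha>, b:=q!b]" using ab by (simp add: z'_def list_update_swap)
    show "((z \<in> S) = (z[a:=\<alpha>] \<in> S)) = ((mixw z B q \<in> S) = ((mixw z B q)[a:=\<alpha>] \<in> S))"
      using ih r m sw unfolding z'_def by simp
  qed
qed

lemma sep2: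
  assumes cross: "\<forall>a\<in>A. \<forall>b\<in>B. \<forall>z\<in>words n. splitx S a b z"
    and AB: "A \<inter> B = {}" and An: "A \<subseteq> {..<n}" and Bn: "B \<subseteq> {..<n}"
    and p: "p \<in> words n" and q: "q \<in> words n"
  shows "\<forall>z. z \<in> words n \<longrightarrow> card {a\<in>A. p ! a \<noteq> z ! a} = d \<longrightarrow>
    ((z \<in> S) = (mixw z A p \<in> S)) = ((mixw z B q \<in> S) = (mixw (mixw z B q) A p \<in> S))"
proof (induction d)
  case 0
  show ?case
  proof (intro allI impI)
    fix z assume z: "z \<in> words n" and c: "card {a\<in>A. p ! a \<noteq> z ! a} = 0"
    have fA: "finite A" using An finite_subset by blast
    have e: "{a\<in>A. p ! a \<noteq> z ! a} = {}" using c fA by simp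
    have zl: "length z = n" using z words_len by blast
    have pl: "length p = n" using p words_len by blast
    have "mixw z A p = z" using e zl pl by (intro mixw_id) auto
    moreover have "mixw (mixw z B q) A p = mixw z B q"
    proof (intro mixw_id)
      show "length p = length (mixw z B q)" using zl pl by simp
      fix i assume "i < length (mixw z B q)" "i \<in> A"
      then show "p ! i = mixw z B q ! i" using e AB by (auto simp: mixw_nth)
    qed
    ultimately show "((z \<in> S) = (mixw z A p \<in> S)) = ((mixw z B q \<in> S) = (mixw (mixw z B q) A p \<in> S))"
      by simp
  qed
next
  case (Suc d)
  show ?case
  proof (intro allI impI)
    fix z assume z: "z \<in> words n" and c: "card {a\<in>A. p ! a \<noteq> z ! a} = Suc d"
    have ne: "{a\<in>A. p ! a \<noteq> z ! a} \<noteq> {}"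
    proof
      assume e: "{a\<in>A. p ! a \<noteq> z ! a} = {}" show False using c[unfolded e] by simp
    qed
    then obtain a where a: "a \<in> A" "p ! a \<noteq> z ! a" by blast
    have an: "a < n" using a An by auto
    have aB: "a \<notin> B" using a AB by auto
    have zl: "length z = n" using z words_len by blast
    have pa: "p ! a < 4" using p an words_nth by blast
    define z' where "z' = z[a := p ! a]"
    have z'w: "z' \<in> words n" using words_upd[OF z pa] by (simp add: z'_def)
    have "{a'\<in>A. p ! a' \<noteq> z' ! a'} = {a'\<in>A. p ! a' \<noteq> z ! a'} - {a}"
      using zl an by (auto simp: z'_def nth_list_update)
    then have "card {a'\<in>A. p ! a' \<noteq> z' ! a'} = d" using c a An finite_subset by simp
    then have ih: "((z' \<in> S) = (mixw z' A p \<in> S)) = ((mixw z' B q \<in> S) = (mixw (mixw z' B q) A p \<in> S))"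
      using Suc.IH z'w by blast
    have m1: "mixw z' A p = mixw z A p"
    proof (rule nth_equalityI)
      show "length (mixw z' A p) = length (mixw z A p)" by (simp add: z'_def)
      fix i assume i: "i < length (mixw z' A p)"
      show "mixw z' A p ! i = mixw z A p ! i"
      proof (cases "i \<in> A")
        case True then show ?thesis using i by (simp add: z'_def mixw_nth)
      next
        case False
        then have "i \<noteq> a" using a(1) by auto
        then show ?thesis using i False by (simp add: z'_def mixw_nth)
      qed
    qed
    have m2: "mixw z' B q = (mixw z B q)[a := p ! a]"
    proof (rule nth_equalityI)
      show "length (mixw z' B q) = length ((mixw z B q)[a := p ! a])" by (simp add: z'_def)
      fix i assume i: "i < length (mixw z' B q)"
      show "mixw z' B q ! i = (mixw z B q)[a := p ! a] ! i"
      proof (cases "i = a")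
        case True then show ?thesis using i aB by (simp add: z'_def mixw_nth)
      next
        case False then show ?thesis using i by (simp add: z'_def mixw_nth)
      qed
    qed
    have m3: "mixw (mixw z' B q) A p = mixw (mixw z B q) A p"
    proof (rule nth_equalityI)
      show "length (mixw (mixw z' B q) A p) = length (mixw (mixw z B q) A p)" by (simp add: z'_def)
      fix i assume i: "i < length (mixw (mixw z' B q) A p)"
      show "mixw (mixw z' B q) A p ! i = mixw (mixw z B q) A p ! i"
      proof (cases "i = a")
        case True then show ?thesis using i a by (simp add: z'_def mixw_nth)
      next
        case False then show ?thesis using i by (simp add: z'_def mixw_nth)
      qed
    qed
    have s1: "((z \<in> S) = (z[a:=p!a] \<in> S)) = ((mixw z B q \<in> S) = ((mixw z B q)[a:=p!a] \<in> S))"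
      using sep1[OF cross AB Bn q a(1) an pa] z by blast
    show "((z \<in> S) = (mixw z A p \<in> S)) = ((mixw z B q \<in> S) = (mixw (mixw z B q) A p \<in> S))"
    proof (rule bool4)
      show "((z \<in> S) = (z' \<in> S)) = ((mixw z B q \<in> S) = ((mixw z B q)[a:=p!a] \<in> S))"
        using s1 by (simp add: z'_def)
      show "((z' \<in> S) = (mixw z A p \<in> S)) = (((mixw z B q)[a:=p!a] \<in> S) = (mixw (mixw z B q) A p \<in> S))"
        using ih m1 m2 m3 by simp
    qed
  qed
qed

lemma card_lessSuc_P: "card {l. l < Suc m \<and> P l} = card {l. l < m \<and> P l} + (if P m then 1 else 0)"
proof -
  have e: "{l. l < Suc m \<and> P l} = {l. l < m \<and> P l} \<union> {l. l = m \<and> P l}" by auto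
  have "card ({l. l < m \<and> P l} \<union> {l. l = m \<and> P l}) = card {l. l < m \<and> P l} + card {l. l = m \<and> P l}"
    by (rule card_Un_disjoint) auto
  moreover have "card {l. l = m \<and> P l} = (if P m then 1 else 0)"
  proof (cases "P m")
    case True then have "{l. l = m \<and> P l} = {m}" by auto
    then show ?thesis using True by simp
  next
    case False then have "{l. l = m \<and> P l} = {}" by auto
    then show ?thesis using False by simp
  qed
  ultimately show ?thesis using e by simp
qed

lemma sep_multi:
  fixes K :: "nat \<Rightarrow> nat set" and k m n :: nat
  assumes disj: "\<forall>l<k. \<forall>l'<k. l \<noteq> l' \<longrightarrow> K l \<inter> K l' = {}"
    and sub: "\<forall>l<k. K l \<subseteq> {..<n}"
    and cross: "\<forall>l<k. \<forall>l'<k. l \<noteq> l' \<longrightarrow> (\<forall>a\<in>K l. \<forall>b\<in>K l'. \<forall>z\<in>words n. splitx S a b z)"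
    and y0: "y0 \<in> words n" "y0 \<notin> S" and x: "x \<in> words n"
  shows "m \<le> k \<Longrightarrow> (mixw y0 (\<Union>l<m. K l) x \<in> S) = odd (card {l. l < m \<and> mixw y0 (K l) x \<in> S})"
proof (induction m)
  case 0
  have "mixw y0 {} x = y0" using x y0 by (intro mixw_id) (auto simp: words_len)
  then show ?case using y0 by simp
next
  case (Suc m)
  have mk: "m < k" "m \<le> k" using Suc.prems by auto
  let ?A = "\<Union>l<m. K l" and ?B = "K m"
  have AB: "?A \<inter> ?B = {}"
  proof (rule ccontr)
    assume "?A \<inter> ?B \<noteq> {}"
    then obtain x l where "l < m" "x \<in> K l" "x \<in> K m" by blast
    moreover have "K l \<inter> K m = {}" using disj mk \<open>l < m\<close> by auto
    ultimately show False by blast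
  qed
  have An: "?A \<subseteq> {..<n}"
  proof
    fix x assume "x \<in> ?A"
    then obtain l where "l < m" "x \<in> K l" by blast
    then show "x \<in> {..<n}" using sub mk by (meson less_trans subsetD)
  qed
  have Bn: "?B \<subseteq> {..<n}" using sub mk by auto
  have cr: "\<forall>a\<in>?A. \<forall>b\<in>?B. \<forall>z\<in>words n. splitx S a b z"
  proof (intro ballI)
    fix a b z assume a: "a \<in> ?A" and b: "b \<in> ?B" and z: "z \<in> words n"
    obtain l where l: "l < m" "a \<in> K l" using a by blast
    have "l < k" "l \<noteq> m" using l mk by auto
    then show "splitx S a b z" using cross l(2) b z mk(1) by blast
  qed
  have s: "((y0 \<in> S) = (mixw y0 ?A x \<in> S)) = ((mixw y0 ?B x \<in> S) = (mixw (mixw y0 ?B x) ?A x \<in> S))"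
    using sep2[OF cr AB An Bn x x] y0 by blast
  have e: "mixw (mixw y0 ?B x) ?A x = mixw y0 (\<Union>l<Suc m. K l) x"
    by (intro nth_equalityI) (auto simp: mixw_nth lessThan_Suc)
  have ih: "(mixw y0 ?A x \<in> S) = odd (card {l. l < m \<and> mixw y0 (K l) x \<in> S})" using Suc.IH mk by simp
  show ?case using s e ih y0(2) card_lessSuc_P[of m "\<lambda>l. mixw y0 (K l) x \<in> S"] by auto
qed




lemma card_split_one:
  fixes k l :: nat
  assumes "l < k"
  shows "card {l'. l' < k \<and> P l'} = card {l'. l' < k \<and> l' \<noteq> l \<and> P l'} + (if P l then 1 else 0)"
proof -
  have e: "{l'. l' < k \<and> P l'} = {l'. l' < k \<and> l' \<noteq> l \<and> P l'} \<union> {l'. l' = l \<and> P l'}" using assms by auto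
  have "card ({l'. l' < k \<and> l' \<noteq> l \<and> P l'} \<union> {l'. l' = l \<and> P l'}) =
        card {l'. l' < k \<and> l' \<noteq> l \<and> P l'} + card {l'. l' = l \<and> P l'}"
    by (rule card_Un_disjoint) auto
  moreover have "card {l'. l' = l \<and> P l'} = (if P l then 1 else 0)"
  proof (cases "P l")
    case True then have "{l'. l' = l \<and> P l'} = {l}" by auto
    then show ?thesis using True by simp
  next
    case False then have "{l'. l' = l \<and> P l'} = {}" by auto
    then show ?thesis using False by simp
  qed
  ultimately show ?thesis using e by simp
qed

lemma card_compl_4: "card {a::nat. a < 4 \<and> \<not> P a} = 4 - card {a. a < 4 \<and> P a}"
  unfolding card4 by simp

lemma splitP_xor:
  assumes h: "\<forall>a b. a < 4 \<longrightarrow> b < 4 \<longrightarrow> ((a,b) \<in> P) = (((a,b) \<in> Q) \<noteq> c)"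
  shows "splitP P = splitP Q"
proof -
  have eq: "((((a, b) \<in> P) = ((a', b) \<in> P)) = (((a, b') \<in> P) = ((a', b') \<in> P))) =
        ((((a, b) \<in> Q) = ((a', b) \<in> Q)) = (((a, b') \<in> Q) = ((a', b') \<in> Q)))"
    if lt: "a < 4" "a' < 4" "b < 4" "b' < 4" for a a' b b'
  proof -
    have e1: "((a,b) \<in> P) = (((a,b) \<in> Q) \<noteq> c)" using h lt by blast
    have e2: "((a',b) \<in> P) = (((a',b) \<in> Q) \<noteq> c)" using h lt by blast
    have e3: "((a,b') \<in> P) = (((a,b') \<in> Q) \<noteq> c)" using h lt by blast
    have e4: "((a',b') \<in> P) = (((a',b') \<in> Q) \<noteq> c)" using h lt by blast
    show ?thesis unfolding e1 e2 e3 e4 by (cases c) simp_all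
  qed
  show ?thesis
  proof (rule iffI)
    assume H: "splitP P"
    show "splitP Q" unfolding splitP_def
    proof (intro allI impI)
      fix a a' b b' :: nat assume lt: "a < 4" "a' < 4" "b < 4" "b' < 4"
      have "(((a, b) \<in> P) = ((a', b) \<in> P)) = (((a, b') \<in> P) = ((a', b') \<in> P))"
        using H lt unfolding splitP_def by blast
      then show "(((a, b) \<in> Q) = ((a', b) \<in> Q)) = (((a, b') \<in> Q) = ((a', b') \<in> Q))"
        using eq[OF lt] by simp
    qed
  next
    assume H: "splitP Q"
    show "splitP P" unfolding splitP_def
    proof (intro allI impI)
      fix a a' b b' :: nat assume lt: "a < 4" "a' < 4" "b < 4" "b' < 4"
      have "(((a, b) \<in> Q) = ((a', b) \<in> Q)) = (((a, b') \<in> Q) = ((a', b') \<in> Q))"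
        using H lt unfolding splitP_def by blast
      then show "(((a, b) \<in> P) = ((a', b) \<in> P)) = (((a, b') \<in> P) = ((a', b') \<in> P))"
        using eq[OF lt] by simp
    qed
  qed
qed

locale fam =
  fixes n :: nat and S :: "nat list set" and k :: nat and K :: "nat \<Rightarrow> nat set" and y0 :: "nat list"
  assumes M: "double_MDS_code n S"
    and y0: "y0 \<in> words n" "y0 \<notin> S"
    and disj: "\<forall>l<k. \<forall>l'<k. l \<noteq> l' \<longrightarrow> K l \<inter> K l' = {}"
    and sub: "\<forall>l<k. K l \<subseteq> {..<n}"
    and cover: "(\<Union>l<k. K l) = {..<n}"
    and ne: "\<forall>l<k. K l \<noteq> {}"
    and cross: "\<forall>l<k. \<forall>l'<k. l \<noteq> l' \<longrightarrow> (\<forall>a\<in>K l. \<forall>b\<in>K l'. \<forall>z\<in>words n. splitx S a b z)"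
    and inner: "\<forall>l<k. \<forall>p\<in>K l. \<forall>q\<in>K l. (gam S n)\<^sup>*\<^sup>* p q"
    and closed: "\<forall>l<k. \<forall>p\<in>K l. \<forall>q. (gam S n)\<^sup>*\<^sup>* p q \<longrightarrow> q \<in> K l"
begin

definition Ss :: "nat \<Rightarrow> nat list set" where
  "Ss l = {z \<in> words (card (K l)). liftb y0 (K l) z \<in> S}"

definition Cs :: "nat \<Rightarrow> nat list set" where
  "Cs l = words (card (K l)) - Ss l"

definition mem :: "nat list \<Rightarrow> nat \<Rightarrow> bool" where
  "mem x l = (nths x (K l) \<in> Ss l)"

lemma SW: "S \<subseteq> words n" using M by (simp add: MDS_iff)

lemma fK: "l < k \<Longrightarrow> finite (K l)"
  using sub finite_subset by blast

lemma Kn: "l < k \<Longrightarrow> p \<in> K l \<Longrightarrow> p < n"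
  using sub by blast

lemma y0l: "length y0 = n" using y0 words_len by blast

lemma mem_iff: "x \<in> words n \<Longrightarrow> l < k \<Longrightarrow> mem x l = (mixw y0 (K l) x \<in> S)"
proof -
  assume x: "x \<in> words n" and l: "l < k"
  have w: "nths x (K l) \<in> words (card (K l))" using nths_words[OF x] sub l by blast
  have "mixw y0 (K l) x = liftb y0 (K l) (nths x (K l))" using mixw_liftb[OF x y0(1)] sub l by blast
  then show ?thesis using w by (simp add: mem_def Ss_def)
qed

lemma sepS: "x \<in> words n \<Longrightarrow> (x \<in> S) = odd (card {l. l < k \<and> mem x l})"
proof -
  assume x: "x \<in> words n"
  have "(mixw y0 (\<Union>l<k. K l) x \<in> S) = odd (card {l. l < k \<and> mixw y0 (K l) x \<in> S})"
    using sep_multi[OF disj sub cross y0 x, of k] by simp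
  moreover have "mixw y0 (\<Union>l<k. K l) x = x" unfolding cover using x y0l by (intro mixw_all) (auto simp: words_len)
  moreover have "{l. l < k \<and> mixw y0 (K l) x \<in> S} = {l. l < k \<and> mem x l}" using mem_iff[OF x] by auto
  ultimately show ?thesis by simp
qed

lemma lift_words: "l < k \<Longrightarrow> z \<in> words (card (K l)) \<Longrightarrow> liftb y0 (K l) z \<in> words n"
  using liftb_words[OF y0(1)] sub by blast

lemma lift_upd:
  assumes l: "l < k" and z: "z \<in> words (card (K l))" and r: "r < card (K l)"
  shows "liftb y0 (K l) (z[r:=a]) = (liftb y0 (K l) z)[pos (K l) r := a]"
  using liftb_upd[of "K l" y0 r z a] sub l y0l r z by (simp add: words_len)

lemma Ss_MDS: assumes l: "l < k" shows "double_MDS_code (card (K l)) (Ss l)"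
  unfolding MDS_iff
proof (intro conjI ballI allI impI)
  show "Ss l \<subseteq> words (card (K l))" by (auto simp: Ss_def)
next
  fix z r assume z: "z \<in> words (card (K l))" and r: "r < card (K l)"
  have p: "pos (K l) r \<in> K l" using pos_props[OF fK[OF l] r] by simp
  have pn: "pos (K l) r < n" using Kn[OF l p] .
  have "{a. a < 4 \<and> z[r:=a] \<in> Ss l} = {a. a < 4 \<and> (liftb y0 (K l) z)[pos (K l) r := a] \<in> S}"
    using words_upd[OF z] lift_upd[OF l z r] by (auto simp: Ss_def)
  then show "cnt (Ss l) z r = 2"
    using mds_cnt[OF M lift_words[OF l z] pn] by (simp add: cnt_def)
qed

lemma Cs_MDS: assumes l: "l < k" shows "double_MDS_code (card (K l)) (Cs l)"
  unfolding MDS_iff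
proof (intro conjI ballI allI impI)
  show "Cs l \<subseteq> words (card (K l))" by (auto simp: Cs_def)
next
  fix z r assume z: "z \<in> words (card (K l))" and r: "r < card (K l)"
  have "{a. a < 4 \<and> z[r:=a] \<in> Cs l} = {a. a < 4 \<and> \<not> z[r:=a] \<in> Ss l}"
    using words_upd[OF z] by (auto simp: Cs_def)
  then show "cnt (Cs l) z r = 2"
    using mds_cnt[OF Ss_MDS[OF l] z r] card_compl_4[of "\<lambda>a. z[r:=a] \<in> Ss l"] by (simp add: cnt_def)
qed

lemma PL_Ss:
  assumes l: "l < k" and z: "z \<in> words (card (K l))" and r: "r < card (K l)" "r' < card (K l)"
  shows "PL (Ss l) r r' z = PL S (pos (K l) r) (pos (K l) r') (liftb y0 (K l) z)"
proof -
  have "(z[r:=a, r':=b] \<in> Ss l) = ((liftb y0 (K l) z)[pos (K l) r := a, pos (K l) r' := b] \<in> S)"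
    if ab: "a < 4" "b < 4" for a b
  proof -
    have w1: "z[r:=a] \<in> words (card (K l))" using words_upd[OF z ab(1)] .
    have w2: "z[r:=a, r':=b] \<in> words (card (K l))" using words_upd[OF w1 ab(2)] .
    have "liftb y0 (K l) (z[r:=a, r':=b]) = (liftb y0 (K l) (z[r:=a]))[pos (K l) r' := b]"
      using lift_upd[OF l w1 r(2)] .
    also have "\<dots> = (liftb y0 (K l) z)[pos (K l) r := a, pos (K l) r' := b]"
      using lift_upd[OF l z r(1)] by simp
    finally show ?thesis using w2 by (simp add: Ss_def)
  qed
  then show ?thesis by (auto simp: PL_def)
qed

lemma PL_Cs:
  assumes l: "l < k" and z: "z \<in> words (card (K l))"
  shows "PL (Cs l) r r' z = U4 - PL (Ss l) r r' z"
proof -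
  have "(z[r:=a, r':=b] \<in> Cs l) = (z[r:=a, r':=b] \<notin> Ss l)" if ab: "a < 4" "b < 4" for a b
    using words_upd[OF words_upd[OF z ab(1)] ab(2)] by (simp add: Cs_def)
  then show ?thesis by (auto simp: PL_def U4_def)
qed

lemma gam_Cs: assumes l: "l < k" shows "gam (Cs l) (card (K l)) = gam (Ss l) (card (K l))"
proof (intro ext)
  fix r r'
  have "splitx (Cs l) r r' z = splitx (Ss l) r r' z" if z: "z \<in> words (card (K l))" for z
  proof -
    have e: "PL (Cs l) r r' z = U4 - PL (Ss l) r r' z" using PL_Cs[OF l z] .
    have u: "U4 - (U4 - PL (Ss l) r r' z) = PL (Ss l) r r' z" using PL_U4 by (simp add: double_diff)
    show ?thesis unfolding splitx_def e using splitP_compl u by metis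
  qed
  then show "gam (Cs l) (card (K l)) r r' = gam (Ss l) (card (K l)) r r'"
    unfolding gam_def by auto
qed

lemma mem_upd_out:
  assumes x: "x \<in> words n" and l: "l < k" and p: "p \<notin> K l"
  shows "mem (x[p:=a]) l = mem x l"
proof -
  have "K l \<subseteq> {..<length x}" using sub l x by (simp add: words_len)
  then show ?thesis unfolding mem_def using nths_upd_out[OF p, of x a] by simp
qed

lemma blk_unique: "l < k \<Longrightarrow> l' < k \<Longrightarrow> p \<in> K l \<Longrightarrow> p \<in> K l' \<Longrightarrow> l = l'"
  using disj by blast

lemma mixw_upd_in:
  assumes pp: "p \<in> K l" "p' \<in> K l" and xl: "length x = length y0"
    and pl: "p < length y0" "p' < length y0"
  shows "mixw y0 (K l) (x[p:=a, p':=b]) = (mixw y0 (K l) x)[p:=a, p':=b]"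
proof (rule nth_equalityI)
  show "length (mixw y0 (K l) (x[p:=a, p':=b])) = length ((mixw y0 (K l) x)[p:=a, p':=b])" by simp
  fix i assume i: "i < length (mixw y0 (K l) (x[p:=a, p':=b]))"
  then have il: "i < length y0" by simp
  show "mixw y0 (K l) (x[p:=a, p':=b]) ! i = (mixw y0 (K l) x)[p:=a, p':=b] ! i"
  proof (cases "i \<in> K l")
    case True
    then show ?thesis using il xl pl by (simp add: mixw_nth nth_list_update)
  next
    case False
    then have "i \<noteq> p" "i \<noteq> p'" using pp by auto
    then show ?thesis using il False by (simp add: mixw_nth)
  qed
qed

lemma split_mix:
  assumes l: "l < k" and p: "p \<in> K l" "p' \<in> K l" and x: "x \<in> words n"
  shows "splitx S p p' x = splitx S p p' (mixw y0 (K l) x)"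
proof -
  define c0 where "c0 = odd (card {l'. l' < k \<and> l' \<noteq> l \<and> mem x l'})"
  have key: "((a,b) \<in> PL S p p' x) = (((a,b) \<in> PL S p p' (mixw y0 (K l) x)) \<noteq> c0)"
    if ab: "a < 4" "b < 4" for a b
  proof -
    let ?u = "x[p:=a, p':=b]"
    have uw: "?u \<in> words n" using words_upd[OF words_upd[OF x ab(1)] ab(2)] .
    have o: "mem ?u l' = mem x l'" if "l' < k" "l' \<noteq> l" for l'
    proof -
      have "p \<notin> K l'" "p' \<notin> K l'" using blk_unique[OF l that(1)] p that(2) by auto
      then show ?thesis using mem_upd_out words_upd x ab that(1) by metis
    qed
    have m: "mem ?u l = ((mixw y0 (K l) x)[p:=a, p':=b] \<in> S)"
      using mem_iff[OF uw l] mixw_upd_in[OF p, of x a b] x y0l Kn[OF l p(1)] Kn[OF l p(2)] by (simp add: words_len)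
    have "{l'. l' < k \<and> l' \<noteq> l \<and> mem ?u l'} = {l'. l' < k \<and> l' \<noteq> l \<and> mem x l'}" using o by auto
    then have "(?u \<in> S) = odd (card {l'. l' < k \<and> l' \<noteq> l \<and> mem x l'} + (if mem ?u l then 1 else 0))"
      using sepS[OF uw] card_split_one[OF l, of "mem ?u"] by simp
    then have "(?u \<in> S) = (mem ?u l \<noteq> c0)" unfolding c0_def by auto
    then show ?thesis using m ab by (simp add: PL_def)
  qed
  show ?thesis unfolding splitx_def using splitP_xor[of "PL S p p' x" "PL S p p' (mixw y0 (K l) x)" c0] key by blast
qed

lemma gam_transport:
  assumes l: "l < k" and p: "p \<in> K l" "p' \<in> K l" and g: "gam S n p p'"
  shows "gam (Ss l) (card (K l)) (rank (K l) p) (rank (K l) p')"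
proof -
  have pp: "p \<noteq> p'" and ns: "\<exists>x\<in>words n. \<not> splitx S p p' x" using g by (auto simp: gam_def)
  obtain x where x: "x \<in> words n" "\<not> splitx S p p' x" using ns by blast
  let ?z = "nths x (K l)"
  have zw: "?z \<in> words (card (K l))" using nths_words[OF x(1)] sub l by blast
  have r: "rank (K l) p < card (K l)" "rank (K l) p' < card (K l)" using rank_lt[OF fK[OF l]] p by auto
  have pr: "pos (K l) (rank (K l) p) = p" "pos (K l) (rank (K l) p') = p'" using pos_rank[OF fK[OF l]] p by auto
  have "mixw y0 (K l) x = liftb y0 (K l) ?z" using mixw_liftb[OF x(1) y0(1)] sub l by blast
  then have "\<not> splitx S p p' (liftb y0 (K l) ?z)" using split_mix[OF l p x(1)] x(2) by simp
  then have "\<not> splitx (Ss l) (rank (K l) p) (rank (K l) p') ?z"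
    unfolding splitx_def using PL_Ss[OF l zw r] pr by simp
  moreover have "rank (K l) p \<noteq> rank (K l) p'" using rank_inj[OF fK[OF l] p] pp by blast
  ultimately show ?thesis using r zw unfolding gam_def by blast
qed

lemma Ss_gam_conn:
  assumes l: "l < k"
  shows "\<forall>r<card (K l). (gam (Ss l) (card (K l)))\<^sup>*\<^sup>* 0 r"
proof (intro allI impI)
  fix r assume r: "r < card (K l)"
  have c0: "0 < card (K l)" using ne l fK[OF l] by (simp add: card_gt_0_iff)
  let ?p0 = "pos (K l) 0"
  have p0: "?p0 \<in> K l" "rank (K l) ?p0 = 0" using pos_props[OF fK[OF l] c0] by auto
  have pr: "pos (K l) r \<in> K l" "rank (K l) (pos (K l) r) = r" using pos_props[OF fK[OF l] r] by auto
  have path: "(gam S n)\<^sup>*\<^sup>* ?p0 (pos (K l) r)" using inner l p0(1) pr(1) by blast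
  have "q \<in> K l \<and> (gam (Ss l) (card (K l)))\<^sup>*\<^sup>* 0 (rank (K l) q)" if "(gam S n)\<^sup>*\<^sup>* ?p0 q" for q
    using that
  proof (induction rule: rtranclp_induct)
    case base then show ?case using p0 by simp
  next
    case (step q q')
    have q': "q' \<in> K l" using closed l p0(1) step.hyps by (meson rtranclp.rtrancl_into_rtrancl)
    have "gam (Ss l) (card (K l)) (rank (K l) q) (rank (K l) q')"
      using gam_transport[OF l _ q' step.hyps(2)] step.IH by blast
    then show ?case using q' step.IH by (meson rtranclp.rtrancl_into_rtrancl)
  qed
  then show "(gam (Ss l) (card (K l)))\<^sup>*\<^sup>* 0 r" using path pr by metis
qed

lemma cK0: "l < k \<Longrightarrow> 0 < card (K l)"
  using ne fK by (simp add: card_gt_0_iff)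

lemma Ss_conn: assumes l: "l < k" shows "\<forall>x\<in>Ss l. \<forall>y\<in>Ss l. (adj_in (Ss l))\<^sup>*\<^sup>* x y"
proof (intro ballI)
  fix x y assume "x \<in> Ss l" "y \<in> Ss l"
  then show "(adj_in (Ss l))\<^sup>*\<^sup>* x y" using conn_main[OF Ss_MDS[OF l] cK0[OF l] Ss_gam_conn[OF l]] by blast
qed

lemma Cs_conn: assumes l: "l < k" shows "\<forall>x\<in>Cs l. \<forall>y\<in>Cs l. (adj_in (Cs l))\<^sup>*\<^sup>* x y"
proof (intro ballI)
  fix x y assume "x \<in> Cs l" "y \<in> Cs l"
  have g: "\<forall>r<card (K l). (gam (Cs l) (card (K l)))\<^sup>*\<^sup>* 0 r" using Ss_gam_conn[OF l] gam_Cs[OF l] by simp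
  show "(adj_in (Cs l))\<^sup>*\<^sup>* x y" using conn_main[OF Cs_MDS[OF l] cK0[OF l] g] \<open>x \<in> Cs l\<close> \<open>y \<in> Cs l\<close> by blast
qed

lemma mds_ne: assumes "double_MDS_code N T" "0 < N" shows "T \<noteq> {}"
proof
  assume e: "T = {}"
  have "replicate N 0 \<in> words N" by (simp add: words_iff)
  from mds_cnt[OF assms(1) this assms(2)] show False unfolding e cnt_def by simp
qed

lemma Ss_ne: "l < k \<Longrightarrow> Ss l \<noteq> {}"
  using mds_ne[OF Ss_MDS cK0] by blast

lemma Cs_ne: "l < k \<Longrightarrow> Cs l \<noteq> {}"
  using mds_ne[OF Cs_MDS cK0] by blast

lemma Ss_prime: "l < k \<Longrightarrow> prime_code (card (K l)) (Ss l)"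
  using prime_of_conn[OF Ss_MDS Ss_ne Ss_conn] by blast

end




context fam
begin

lemma Kl: "l < k \<Longrightarrow> u \<in> words n \<Longrightarrow> K l \<subseteq> {..<length u}"
  using sub by (simp add: words_len)

lemma mem_liftb_other:
  assumes u: "u \<in> words n" and l: "l < k" "l' < k" "l' \<noteq> l" and w: "w \<in> words (card (K l))"
  shows "mem (liftb u (K l) w) l' = mem u l'"
proof -
  have "nths (liftb u (K l) w) (K l') = nths u (K l')"
  proof (subst nths_eq_iff)
    show "length (liftb u (K l) w) = length u" by simp
    show "K l' \<subseteq> {..<length (liftb u (K l) w)}" using Kl[OF l(2) u] by simp
    show "\<forall>p\<in>K l'. liftb u (K l) w ! p = u ! p"
    proof
      fix p assume p: "p \<in> K l'"
      then have "p \<notin> K l" using disj l by blast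
      moreover have "p < length u" using p Kl[OF l(2) u] by auto
      ultimately show "liftb u (K l) w ! p = u ! p" by (simp add: liftb_nth)
    qed
  qed
  then show ?thesis by (simp add: mem_def)
qed

lemma mem_liftb_same:
  assumes u: "u \<in> words n" and l: "l < k" and w: "w \<in> words (card (K l))"
  shows "mem (liftb u (K l) w) l = (w \<in> Ss l)"
  using nths_liftb[OF Kl[OF l u]] w by (simp add: mem_def words_len)

lemma liftb_words': "u \<in> words n \<Longrightarrow> l < k \<Longrightarrow> w \<in> words (card (K l)) \<Longrightarrow> liftb u (K l) w \<in> words n"
  using liftb_words sub by blast

lemma lift_in_S:
  assumes u: "u \<in> S" and l: "l < k" and w: "w \<in> words (card (K l))"
  shows "(liftb u (K l) w \<in> S) = ((w \<in> Ss l) = mem u l)"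
proof -
  have uw: "u \<in> words n" using u SW by auto
  have lw: "liftb u (K l) w \<in> words n" using liftb_words'[OF uw l w] .
  have o: "{l'. l' < k \<and> l' \<noteq> l \<and> mem (liftb u (K l) w) l'} = {l'. l' < k \<and> l' \<noteq> l \<and> mem u l'}"
    using mem_liftb_other[OF uw l _ _ w] by auto
  have a: "(liftb u (K l) w \<in> S) = odd (card {l'. l' < k \<and> l' \<noteq> l \<and> mem u l'} + (if w \<in> Ss l then 1 else 0))"
    using sepS[OF lw] card_split_one[OF l, of "mem (liftb u (K l) w)"] o mem_liftb_same[OF uw l w] by simp
  have b: "odd (card {l'. l' < k \<and> l' \<noteq> l \<and> mem u l'} + (if mem u l then 1 else 0))"
    using sepS[OF uw] card_split_one[OF l, of "mem u"] u by simp
  show ?thesis using a b by auto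
qed

lemma block_move:
  assumes l: "l < k" and u: "u \<in> S" and v: "v \<in> S"
    and ag: "\<forall>p<n. p \<notin> K l \<longrightarrow> u ! p = v ! p" and mm: "mem u l = mem v l"
  shows "(adj_in S)\<^sup>*\<^sup>* u v"
proof -
  have uw: "u \<in> words n" and vw: "v \<in> words n" using u v SW by auto
  define C where "C = (if mem u l then Ss l else Cs l)"
  have CW: "C \<subseteq> words (card (K l))" by (auto simp: C_def Ss_def Cs_def)
  have inC: "w \<in> C \<longleftrightarrow> (w \<in> Ss l) = mem u l" if "w \<in> words (card (K l))" for w
    using that by (auto simp: C_def Cs_def)
  have Cc: "\<forall>x\<in>C. \<forall>y\<in>C. (adj_in C)\<^sup>*\<^sup>* x y" using Ss_conn[OF l] Cs_conn[OF l] by (simp add: C_def)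
  let ?zu = "nths u (K l)" and ?zv = "nths v (K l)"
  have zuw: "?zu \<in> words (card (K l))" and zvw: "?zv \<in> words (card (K l))"
    using nths_words uw vw sub l by blast+
  have zu: "?zu \<in> C" using inC[OF zuw] by (simp add: mem_def)
  have zv: "?zv \<in> C" using inC[OF zvw] mm by (simp add: mem_def)
  have lu: "liftb u (K l) ?zu = u" by (rule liftb_nths) (use Kl[OF l uw] in auto)
  have lv: "liftb u (K l) ?zv = v"
    by (rule liftb_nths) (use Kl[OF l uw] uw vw ag in \<open>auto simp: words_len\<close>)
  have "(adj_in S)\<^sup>*\<^sup>* u (liftb u (K l) w)" if "(adj_in C)\<^sup>*\<^sup>* ?zu w" for w
    using that
  proof (induction rule: rtranclp_induct)
    case base then show ?case using lu by simp
  next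
    case (step w w')
    have ww: "w \<in> C" "w' \<in> C" "adjacent w w'" using step.hyps(2) by (auto simp: adj_in_def)
    have wW: "w \<in> words (card (K l))" "w' \<in> words (card (K l))" using ww CW by auto
    obtain r where r: "r < length w" "w' = w[r := w' ! r]" "w ! r \<noteq> w' ! r"
      using adjacent_iff_upd[OF ww(3)] by blast
    have rN: "r < card (K l)" using r wW by (simp add: words_len)
    have wl: "length w = card (K l)" using wW words_len by blast
    have up: "liftb u (K l) w' = (liftb u (K l) w)[pos (K l) r := w' ! r]"
      using liftb_upd[OF Kl[OF l uw] rN wl] r(2) by metis
    have pr: "pos (K l) r \<in> K l" "rank (K l) (pos (K l) r) = r" using pos_props[OF fK[OF l] rN] by auto
    have pl: "pos (K l) r < length (liftb u (K l) w)" using pr Kl[OF l uw] by auto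
    have "liftb u (K l) w ! pos (K l) r = w ! r" using pr pl by (simp add: liftb_nth)
    then have ne: "(liftb u (K l) w)[pos (K l) r := w' ! r] \<noteq> liftb u (K l) w"
      using r(3) pl by (metis nth_list_update_eq)
    have adj: "adjacent (liftb u (K l) w) (liftb u (K l) w')"
      using adjacent_upd[OF pl ne] up by simp
    have s1: "liftb u (K l) w \<in> S" using lift_in_S[OF u l wW(1)] inC[OF wW(1)] ww(1) by simp
    have s2: "liftb u (K l) w' \<in> S" using lift_in_S[OF u l wW(2)] inC[OF wW(2)] ww(2) by simp
    have "adj_in S (liftb u (K l) w) (liftb u (K l) w')" using adj s1 s2 by (simp add: adj_in_def)
    then show ?case using step.IH by (meson rtranclp.rtrancl_into_rtrancl)
  qed
  then show ?thesis using Cc zu zv lv by metis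
qed

lemma blk_ex: "p < n \<Longrightarrow> \<exists>l<k. p \<in> K l"
  using cover by auto

lemma E1:
  assumes a: "adj_in S x y"
  shows "\<forall>l<k. mem x l = mem y l"
proof -
  have x: "x \<in> S" and y: "y \<in> S" and ad: "adjacent x y" using a by (auto simp: adj_in_def)
  have xw: "x \<in> words n" and yw: "y \<in> words n" using x y SW by auto
  obtain p where p: "p < length x" "y = x[p := y ! p]" "x ! p \<noteq> y ! p" using adjacent_iff_upd[OF ad] by blast
  have pn: "p < n" using p xw by (simp add: words_len)
  obtain l0 where l0: "l0 < k" "p \<in> K l0" using blk_ex[OF pn] by blast
  have o: "mem x l = mem y l" if "l < k" "l \<noteq> l0" for l
  proof -
    have "p \<notin> K l" using l0 that disj by blast
    then show ?thesis using mem_upd_out[OF xw that(1)] p(2) by metis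
  qed
  have eqo: "{l. l < k \<and> l \<noteq> l0 \<and> mem x l} = {l. l < k \<and> l \<noteq> l0 \<and> mem y l}" using o by auto
  have "odd (card {l. l < k \<and> l \<noteq> l0 \<and> mem x l} + (if mem x l0 then 1 else 0))"
    using sepS[OF xw] x card_split_one[OF l0(1), of "mem x"] by simp
  moreover have "odd (card {l. l < k \<and> l \<noteq> l0 \<and> mem x l} + (if mem y l0 then 1 else 0))"
    using sepS[OF yw] y card_split_one[OF l0(1), of "mem y"] eqo by simp
  ultimately have "mem x l0 = mem y l0" by (cases "mem x l0"; cases "mem y l0") auto
  then show ?thesis using o by metis
qed

lemma E1rt: "(adj_in S)\<^sup>*\<^sup>* x y \<Longrightarrow> \<forall>l<k. mem x l = mem y l"
proof (induction rule: rtranclp_induct)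
  case base then show ?case by simp
next
  case (step y z) then show ?case using E1 by metis
qed

lemma E2:
  assumes x: "x \<in> S" and y: "y \<in> S" and mm: "\<forall>l<k. mem x l = mem y l"
  shows "(adj_in S)\<^sup>*\<^sup>* x y"
proof -
  have xw: "x \<in> words n" and yw: "y \<in> words n" using x y SW by auto
  have xl: "length x = n" and yl: "length y = n" using xw yw words_len by auto
  define z where "z m = mixw x (\<Union>l<m. K l) y" for m
  have zw: "z m \<in> words n" for m using mixw_words[OF xw yw] by (simp add: z_def)
  have zmem: "mem (z m) l = (if l < m then mem y l else mem x l)" if l: "l < k" for m l
  proof -
    have Kl': "K l \<subseteq> {..<length x}" using Kl[OF l xw] .
    show ?thesis
    proof (cases "l < m")
      case True
      have "nths (z m) (K l) = nths y (K l)"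
      proof (subst nths_eq_iff)
        show "length (z m) = length y" using xl yl by (simp add: z_def)
        show "K l \<subseteq> {..<length (z m)}" using Kl' by (simp add: z_def)
        show "\<forall>p\<in>K l. z m ! p = y ! p"
        proof
          fix p assume p: "p \<in> K l"
          then have "p \<in> (\<Union>l'<m. K l')" using True by blast
          moreover have "p < length x" using p Kl' by auto
          ultimately show "z m ! p = y ! p" by (simp add: z_def mixw_nth)
        qed
      qed
      then show ?thesis using True by (simp add: mem_def)
    next
      case False
      have "nths (z m) (K l) = nths x (K l)"
      proof (subst nths_eq_iff)
        show "length (z m) = length x" by (simp add: z_def)
        show "K l \<subseteq> {..<length (z m)}" using Kl' by (simp add: z_def)
        show "\<forall>p\<in>K l. z m ! p = x ! p"
        proof
          fix p assume p: "p \<in> K l"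
          have "p \<notin> (\<Union>l'<m. K l')"
          proof
            assume "p \<in> (\<Union>l'<m. K l')"
            then obtain l' where "l' < m" "p \<in> K l'" by blast
            then show False using disj p False l by (metis (no_types, lifting) disjoint_iff less_trans linorder_neqE_nat)
          qed
          moreover have "p < length x" using p Kl' by auto
          ultimately show "z m ! p = x ! p" by (simp add: z_def mixw_nth)
        qed
      qed
      then show ?thesis using False by (simp add: mem_def)
    qed
  qed
  have zS: "z m \<in> S" for m
  proof -
    have e: "mem (z m) l = mem x l" if l: "l < k" for l
    proof (cases "l < m")
      case True then show ?thesis using zmem[OF l] mm l by simp
    next
      case False then show ?thesis using zmem[OF l] by simp
    qed
    have "{l. l < k \<and> mem (z m) l} = {l. l < k \<and> mem x l}" using e by blast
    then show ?thesis using sepS[OF zw] sepS[OF xw] x by simp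
  qed
  have "(adj_in S)\<^sup>*\<^sup>* x (z m)" if "m \<le> k" for m
    using that
  proof (induction m)
    case 0
    have "z 0 = x" unfolding z_def using xl yl by (intro mixw_id) auto
    then show ?case by simp
  next
    case (Suc m)
    have mk: "m < k" using Suc.prems by simp
    have ag: "\<forall>p<n. p \<notin> K m \<longrightarrow> z m ! p = z (Suc m) ! p"
      using xl by (auto simp: z_def mixw_nth lessThan_Suc)
    have "mem (z m) m = mem (z (Suc m)) m" using zmem[OF mk] mm mk by simp
    then have "(adj_in S)\<^sup>*\<^sup>* (z m) (z (Suc m))" using block_move[OF mk zS zS ag] by blast
    then show ?case using Suc.IH Suc.prems by (meson Suc_leD rtranclp_trans)
  qed
  then have "(adj_in S)\<^sup>*\<^sup>* x (z k)" by simp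
  moreover have "z k = y" unfolding z_def cover using xl yl by (intro mixw_all) auto
  ultimately show ?thesis by simp
qed

definition blk :: "nat \<Rightarrow> nat" where
  "blk p = (THE l. l < k \<and> p \<in> K l)"

lemma blk_eq: "l < k \<Longrightarrow> p \<in> K l \<Longrightarrow> blk p = l"
  unfolding blk_def using blk_unique by (intro the_equality) auto

lemma realize:
  assumes t: "odd (card {l. l < k \<and> t l})"
  shows "\<exists>x\<in>S. \<forall>l<k. mem x l = t l"
proof -
  have ex: "\<exists>w. w \<in> words (card (K l)) \<and> (w \<in> Ss l) = t l" if l: "l < k" for l
  proof (cases "t l")
    case True
    obtain w where "w \<in> Ss l" using Ss_ne[OF l] by blast
    then show ?thesis using True by (auto simp: Ss_def)
  next
    case False
    obtain w where "w \<in> Cs l" using Cs_ne[OF l] by blast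
    then show ?thesis using False by (auto simp: Cs_def)
  qed
  define w where "w l = (SOME w. w \<in> words (card (K l)) \<and> (w \<in> Ss l) = t l)" for l
  have w: "w l \<in> words (card (K l))" "(w l \<in> Ss l) = t l" if "l < k" for l
    using someI_ex[OF ex[OF that]] unfolding w_def by auto
  define x where "x = map (\<lambda>p. w (blk p) ! rank (K (blk p)) p) [0..<n]"
  have xl: "length x = n" by (simp add: x_def)
  have xp: "x ! p = w l ! rank (K l) p" if "l < k" "p \<in> K l" for l p
  proof -
    have "p < n" using Kn that by blast
    then show ?thesis using blk_eq[OF that] by (simp add: x_def)
  qed
  have xw: "x \<in> words n"
  proof -
    have "x ! p < 4" if p: "p < n" for p
    proof -
      obtain l where l: "l < k" "p \<in> K l" using blk_ex[OF p] by blast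
      have "rank (K l) p < card (K l)" using rank_lt[OF fK[OF l(1)] l(2)] .
      then show ?thesis using xp[OF l] w(1)[OF l(1)] by (simp add: words_len words_nth)
    qed
    then show ?thesis using xl by (simp add: words_iff)
  qed
  have nx: "nths x (K l) = w l" if l: "l < k" for l
  proof (rule nth_equalityI)
    have wl: "length (w l) = card (K l)" using w(1)[OF l] words_len by blast
    show "length (nths x (K l)) = length (w l)" using length_nths_sub[of "K l" x] Kl[OF l xw] wl by simp
    fix r assume r: "r < length (nths x (K l))"
    then have rc: "r < card (K l)" using length_nths_sub[of "K l" x] Kl[OF l xw] by simp
    have q: "pos (K l) r \<in> K l" "rank (K l) (pos (K l) r) = r" using pos_props[OF fK[OF l] rc] by auto
    have ql: "pos (K l) r < length x" using q(1) Kl[OF l xw] by auto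
    have "nths x (K l) ! r = x ! pos (K l) r" using nths_nth_rank[OF q(1) ql] q(2) by simp
    also have "\<dots> = w l ! r" using xp[OF l q(1)] q(2) by simp
    finally show "nths x (K l) ! r = w l ! r" .
  qed
  have mx: "mem x l = t l" if "l < k" for l using nx[OF that] w(2)[OF that] by (simp add: mem_def)
  have "{l. l < k \<and> mem x l} = {l. l < k \<and> t l}" using mx by auto
  then have "x \<in> S" using sepS[OF xw] t by simp
  then show ?thesis using mx by blast
qed

definition pat :: "nat list \<Rightarrow> nat set" where
  "pat x = {l. 1 \<le> l \<and> l < k \<and> mem x l}"

lemma pat_iff:
  assumes k1: "1 \<le> k" and x: "x \<in> S" and y: "y \<in> S"
  shows "(adj_in S)\<^sup>*\<^sup>* x y \<longleftrightarrow> pat x = pat y"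
proof
  assume "(adj_in S)\<^sup>*\<^sup>* x y"
  then have "\<forall>l<k. mem x l = mem y l" by (rule E1rt)
  then show "pat x = pat y" unfolding pat_def by auto
next
  assume p: "pat x = pat y"
  have xw: "x \<in> words n" and yw: "y \<in> words n" using x y SW by auto
  have o: "mem x l = mem y l" if "l < k" "l \<noteq> 0" for l
  proof -
    have "l \<in> pat x \<longleftrightarrow> l \<in> pat y" using p by simp
    then show ?thesis using that unfolding pat_def by auto
  qed
  have k0: "0 < k" using k1 by simp
  have eqo: "{l. l < k \<and> l \<noteq> 0 \<and> mem x l} = {l. l < k \<and> l \<noteq> 0 \<and> mem y l}" using o by auto
  have "odd (card {l. l < k \<and> l \<noteq> 0 \<and> mem x l} + (if mem x 0 then 1 else 0))"
    using sepS[OF xw] x card_split_one[OF k0, of "mem x"] by simp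
  moreover have "odd (card {l. l < k \<and> l \<noteq> 0 \<and> mem x l} + (if mem y 0 then 1 else 0))"
    using sepS[OF yw] y card_split_one[OF k0, of "mem y"] eqo by simp
  ultimately have "mem x 0 = mem y 0" by (cases "mem x 0"; cases "mem y 0") auto
  then have "\<forall>l<k. mem x l = mem y l" using o by metis
  then show "(adj_in S)\<^sup>*\<^sup>* x y" using E2[OF x y] by blast
qed

lemma pat_image: assumes k1: "1 \<le> k" shows "pat ` S = Pow {1..<k}"
proof
  show "pat ` S \<subseteq> Pow {1..<k}" unfolding pat_def by auto
next
  show "Pow {1..<k} \<subseteq> pat ` S"
  proof
    fix J assume J: "J \<in> Pow {1..<k}"
    define t where "t l = (if l = 0 then even (card J) else l \<in> J)" for l
    have fJ: "finite J" using J finite_subset by auto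
    have e: "{l. l < k \<and> t l} = J \<union> {l::nat. l = 0 \<and> even (card J)}"
      using J k1 by (auto simp: t_def)
    have f2: "finite {l::nat. l = 0 \<and> even (card J)}" by (rule finite_subset[of _ "{0}"]) auto
    have d: "J \<inter> {l. l = 0 \<and> even (card J)} = {}" using J by auto
    have "card {l. l < k \<and> t l} = card J + card {l::nat. l = 0 \<and> even (card J)}"
      unfolding e using card_Un_disjoint[OF fJ f2 d] .
    moreover have "card {l::nat. l = 0 \<and> even (card J)} = (if even (card J) then 1 else 0)"
      by (cases "even (card J)") auto
    ultimately have "odd (card {l. l < k \<and> t l})" by auto
    then obtain x where x: "x \<in> S" "\<forall>l<k. mem x l = t l" using realize by blast
    have "pat x = J" using x(2) J unfolding pat_def t_def by auto
    then show "J \<in> pat ` S" using x(1) by blast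
  qed
qed

lemma count_components: assumes k1: "1 \<le> k" shows "card (components S) = 2 ^ (k - 1)"
proof -
  have comp: "components S = (\<lambda>J. {y \<in> S. pat y = J}) ` (pat ` S)"
  proof -
    have "{y \<in> S. (adj_in S)\<^sup>*\<^sup>* x y} = {y \<in> S. pat y = pat x}" if "x \<in> S" for x
      using pat_iff[OF k1 that] by auto
    then show ?thesis unfolding components_def by auto
  qed
  have inj: "inj_on (\<lambda>J. {y \<in> S. pat y = J}) (pat ` S)"
  proof
    fix J1 J2 assume J1: "J1 \<in> pat ` S" and J2: "J2 \<in> pat ` S"
      and e: "{y \<in> S. pat y = J1} = {y \<in> S. pat y = J2}"
    obtain x where x: "x \<in> S" "J1 = pat x" using J1 by blast
    then have "x \<in> {y \<in> S. pat y = J2}" using e by blast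
    then show "J1 = J2" using x by simp
  qed
  have "card (components S) = card (pat ` S)" unfolding comp using card_image[OF inj] .
  also have "\<dots> = card (Pow {1..<k})" using pat_image[OF k1] by simp
  also have "\<dots> = 2 ^ (k - 1)" by (simp add: card_Pow)
  finally show ?thesis .
qed

end




theorem corollary4:
  fixes n :: nat and S :: "nat list set"
  assumes "n \<ge> 1"
    and "double_MDS_code n S"
    and "\<not> prime_code n S"
  shows "\<exists>m. card (components S) = 2 ^ m \<and> m \<ge> 1 \<and>
           (\<exists>(Ks :: nat \<Rightarrow> nat set) (Ss :: nat \<Rightarrow> nat list set).
              (\<forall>j < m + 1. Ks j \<noteq> {} \<and> card (Ks j) < n \<and>
                  prime_code (card (Ks j)) (Ss j) \<and> double_MDS_code (card (Ks j)) (Ss j)) \<and>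
              (\<forall>j < m + 1. \<forall>j' < m + 1. j \<noteq> j' \<longrightarrow> Ks j \<inter> Ks j' = {}) \<and>
              (\<Union>j < m + 1. Ks j) = {0..<n} \<and>
              (\<forall>x \<in> words n. x \<in> S \<longleftrightarrow>
                  odd (card {j. j < m + 1 \<and> nths x (Ks j) \<in> Ss j})))"
proof -
  have n1: "1 \<le> n" and M: "double_MDS_code n S" and np: "\<not> prime_code n S" using assms by auto
  have SW: "S \<subseteq> words n" using M by (simp add: MDS_iff)
  define eqv where "eqv = (gam S n)\<^sup>*\<^sup>*"
  have eqv_sym: "eqv i j \<Longrightarrow> eqv j i" for i j unfolding eqv_def by (rule gam_rt_sym)
  have eqv_trans: "eqv i j \<Longrightarrow> eqv j l \<Longrightarrow> eqv i l" for i j l unfolding eqv_def by simp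
  have eqv_lt: "eqv i j \<Longrightarrow> i < n \<Longrightarrow> j < n" for i j unfolding eqv_def by (rule gam_rt_lt)
  define cls where "cls i = {j. j < n \<and> eqv i j}" for i
  define Cl where "Cl = cls ` {..<n}"
  have fCl: "finite Cl" by (simp add: Cl_def)
  define k where "k = card Cl"
  obtain Kf where bij: "bij_betw Kf {0..<k} Cl" using ex_bij_betw_nat_finite[OF fCl] unfolding k_def by blast
  have Kcl: "\<exists>i<n. Kf l = cls i" if "l < k" for l
  proof -
    have "Kf l \<in> Kf ` {0..<k}" using that by simp
    then have "Kf l \<in> Cl" using bij unfolding bij_betw_def by simp
    then show ?thesis unfolding Cl_def by auto
  qed
  have self: "i \<in> cls i" if "i < n" for i using that by (simp add: cls_def eqv_def)
  have cls_same: "cls j = cls i" if "i < n" "j \<in> cls i" for i j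
  proof -
    have ij: "eqv i j" using that by (simp add: cls_def)
    show ?thesis unfolding cls_def using eqv_trans[OF ij] eqv_trans[OF eqv_sym[OF ij]] by auto
  qed
  have disj: "\<forall>l<k. \<forall>l'<k. l \<noteq> l' \<longrightarrow> Kf l \<inter> Kf l' = {}"
  proof (intro allI impI)
    fix l l' assume l: "l < k" "l' < k" "l \<noteq> l'"
    obtain i where i: "i < n" "Kf l = cls i" using Kcl l(1) by blast
    obtain i' where i': "i' < n" "Kf l' = cls i'" using Kcl l(2) by blast
    have ne: "Kf l \<noteq> Kf l'" using bij l unfolding bij_betw_def inj_on_def by auto
    show "Kf l \<inter> Kf l' = {}"
    proof (rule ccontr)
      assume "Kf l \<inter> Kf l' \<noteq> {}"
      then obtain j where j: "j \<in> cls i" "j \<in> cls i'" using i i' by auto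
      then have "cls i = cls i'" using cls_same[OF i(1)] cls_same[OF i'(1)] by metis
      then show False using ne i i' by simp
    qed
  qed
  have sub: "\<forall>l<k. Kf l \<subseteq> {..<n}" using Kcl by (auto simp: cls_def)
  have cover: "(\<Union>l<k. Kf l) = {..<n}"
  proof
    show "(\<Union>l<k. Kf l) \<subseteq> {..<n}" using sub by blast
    show "{..<n} \<subseteq> (\<Union>l<k. Kf l)"
    proof
      fix i assume i: "i \<in> {..<n}"
      then have "cls i \<in> Cl" by (simp add: Cl_def)
      then obtain l where "l < k" "Kf l = cls i" using bij unfolding bij_betw_def by (metis atLeastLessThan_iff imageE)
      then show "i \<in> (\<Union>l<k. Kf l)" using self i by auto
    qed
  qed
  have ne: "\<forall>l<k. Kf l \<noteq> {}" using Kcl self by blast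
  have cross: "\<forall>l<k. \<forall>l'<k. l \<noteq> l' \<longrightarrow> (\<forall>a\<in>Kf l. \<forall>b\<in>Kf l'. \<forall>z\<in>words n. splitx S a b z)"
  proof (intro allI impI ballI)
    fix l l' a b z assume l: "l < k" "l' < k" "l \<noteq> l'" and a: "a \<in> Kf l" and b: "b \<in> Kf l'" and z: "z \<in> words n"
    obtain i where i: "i < n" "Kf l = cls i" using Kcl l(1) by blast
    obtain i' where i': "i' < n" "Kf l' = cls i'" using Kcl l(2) by blast
    have ab: "a \<noteq> b" using disj l a b by blast
    have an: "a < n" "b < n" using a b i i' by (auto simp: cls_def)
    show "splitx S a b z"
    proof (rule ccontr)
      assume "\<not> splitx S a b z"
      then have "gam S n a b" using ab an z unfolding gam_def by blast
      then have "eqv a b" by (simp add: eqv_def)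
      moreover have "eqv i a" using a i by (simp add: cls_def)
      ultimately have "eqv i b" using eqv_trans by blast
      then have "b \<in> Kf l" using i an by (simp add: cls_def)
      then show False using b disj l by blast
    qed
  qed
  have inner: "\<forall>l<k. \<forall>p\<in>Kf l. \<forall>q\<in>Kf l. (gam S n)\<^sup>*\<^sup>* p q"
  proof (intro allI impI ballI)
    fix l p q assume l: "l < k" and p: "p \<in> Kf l" and q: "q \<in> Kf l"
    obtain i where i: "i < n" "Kf l = cls i" using Kcl l by blast
    have "eqv i p" "eqv i q" using p q i by (auto simp: cls_def)
    then show "(gam S n)\<^sup>*\<^sup>* p q" using eqv_sym eqv_trans unfolding eqv_def by metis
  qed
  have closed: "\<forall>l<k. \<forall>p\<in>Kf l. \<forall>q. (gam S n)\<^sup>*\<^sup>* p q \<longrightarrow> q \<in> Kf l"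
  proof (intro allI impI ballI)
    fix l p q assume l: "l < k" and p: "p \<in> Kf l" and pq: "(gam S n)\<^sup>*\<^sup>* p q"
    obtain i where i: "i < n" "Kf l = cls i" using Kcl l by blast
    have ip: "eqv i p" "p < n" using p i by (auto simp: cls_def)
    have "eqv i q" using eqv_trans[OF ip(1)] pq by (simp add: eqv_def)
    moreover have "q < n" using eqv_lt pq ip(2) by (simp add: eqv_def)
    ultimately show "q \<in> Kf l" using i by (simp add: cls_def)
  qed
  obtain y0 where y0: "y0 \<in> words n" "y0 \<notin> S"
  proof -
    let ?r = "replicate n (0::nat)"
    have rw: "?r \<in> words n" by (simp add: words_iff)
    have c: "card {a. a < 4 \<and> ?r[0:=a] \<in> S} = 2" using mds_cnt[OF M rw] n1 by (simp add: cnt_def)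
    have "\<exists>a<4. ?r[0:=a] \<notin> S"
    proof (rule ccontr)
      assume "\<not> ?thesis"
      then have "{a. a < 4 \<and> ?r[0:=a] \<in> S} = {..<4}" by auto
      then show False using c by simp
    qed
    then obtain a where a: "a < 4" "?r[0:=a] \<notin> S" by blast
    show ?thesis using that[of "?r[0:=a]"] a words_upd[OF rw a(1)] by blast
  qed
  interpret F: fam n S k Kf y0
    by (rule fam.intro[OF M y0(1) y0(2) disj sub cover ne cross inner closed])
  have Sne: "S \<noteq> {}" using F.mds_ne[OF M] n1 by simp
  have k1: "1 \<le> k"
  proof -
    have "cls 0 \<in> Cl" using n1 by (simp add: Cl_def)
    then have "Cl \<noteq> {}" by blast
    then show ?thesis using fCl by (simp add: k_def card_gt_0_iff Suc_le_eq)
  qed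
  have k2: "2 \<le> k"
  proof (rule ccontr)
    assume "\<not> 2 \<le> k"
    then have k1': "k = 1" using k1 by simp
    have all0: "i \<in> Kf 0" if "i < n" for i using cover that k1' by auto
    have "\<forall>r<n. (gam S n)\<^sup>*\<^sup>* 0 r" using inner all0 n1 k1' by auto
    then have "\<forall>x\<in>S. \<forall>y\<in>S. (adj_in S)\<^sup>*\<^sup>* x y" using conn_main[OF M] n1 by auto
    then have "prime_code n S" using prime_of_conn[OF M Sne] by blast
    then show False using np by simp
  qed
  define Ss where "Ss l = {z \<in> words (card (Kf l)). liftb y0 (Kf l) z \<in> S}" for l
  have SsF: "Ss = F.Ss" by (rule ext) (simp add: Ss_def F.Ss_def)
  show ?thesis
  proof (intro exI conjI)
    show "card (components S) = 2 ^ (k - 1)" using F.count_components[OF k1] .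
    show "1 \<le> k - 1" using k2 by simp
    show "\<forall>j < k - 1 + 1. Kf j \<noteq> {} \<and> card (Kf j) < n \<and>
                  prime_code (card (Kf j)) (Ss j) \<and> double_MDS_code (card (Kf j)) (Ss j)"
    proof (intro allI impI conjI)
      fix j assume j: "j < k - 1 + 1"
      then have jk: "j < k" using k2 by simp
      show "Kf j \<noteq> {}" using ne jk by blast
      show "prime_code (card (Kf j)) (Ss j)" using F.Ss_prime[OF jk] SsF by simp
      show "double_MDS_code (card (Kf j)) (Ss j)" using F.Ss_MDS[OF jk] SsF by simp
      define j' :: nat where "j' = (if j = 0 then 1 else 0)"
      have j': "j' < k" "j' \<noteq> j" using k2 by (auto simp: j'_def)
      have d: "Kf j \<inter> Kf j' = {}" using disj jk j' by blast
      have u: "Kf j \<union> Kf j' \<subseteq> {..<n}" using sub jk j' by blast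
      have fj: "finite (Kf j)" "finite (Kf j')" using F.fK jk j' by auto
      have "card (Kf j) + card (Kf j') \<le> n"
        using card_Un_disjoint[OF fj d] card_mono[OF _ u] by simp
      moreover have "card (Kf j') \<ge> 1" using ne j' fj by (simp add: Suc_le_eq card_gt_0_iff)
      ultimately show "card (Kf j) < n" by simp
    qed
    show "\<forall>j < k - 1 + 1. \<forall>j' < k - 1 + 1. j \<noteq> j' \<longrightarrow> Kf j \<inter> Kf j' = {}"
      using disj k2 by simp
    show "(\<Union>j < k - 1 + 1. Kf j) = {0..<n}" using cover k2 by (simp add: atLeast0LessThan)
    show "\<forall>x \<in> words n. x \<in> S \<longleftrightarrow> odd (card {j. j < k - 1 + 1 \<and> nths x (Kf j) \<in> Ss j})"
      using F.sepS k2 SsF by (simp add: F.mem_def)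
  qed
qed



end
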